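(* The $\mathrm{LTL}$ formula $\mathsf F\,p$ (equivalent to the $\mathrm{CTL}$ formula $\forall\mathsf F\,p$) cannot be expressed in either $\mathrm{HS}_{\mathsf{ct}}$ or $\mathrm{HS}_{\mathsf{st}}$: there is no $\mathrm{HS}$ formula $\psi$ such that for every finite Kripke structure $K$, $K\models_{\mathsf{st}}\psi$ iff $K\models\mathsf F\,p$, and there is no $\mathrm{HS}$ formula $\psi$ such that for every finite Kripke structure $K$, $K\models_{\mathsf{ct}}\psi$ iff $K\models\mathsf F\,p$.
   Context: A Kripke structure over a finite set $\mathcal{AP}$ (containing $p$) is $K=(\mathcal{AP},S,\delta,\mu,s_0)$ with states $S$, left-total $\delta\subseteq S\times S$, labelling $\mu:S\to2^{\mathcal{AP}}$, initial state $s_0$; finite if $S$ is finite. Infinite paths are infinite state sequences following $\delta$; traces are their non-empty finite prefixes; initial means starting at $s_0$. $K\models\mathsf F\,p$ iff every initial infinite path $\pi$ has some $i\ge0$ with $p\in\mu(\pi(i))$. For a finite word $w=w(0)\cdots w(n)$, $\mathrm{Pref}(w)=\{w[0,i]\mid0\le i\le n-1\}$, $\mathrm{Suff}(w)=\{w[i,n]\mid1\le i\le n\}$. The computation tree $C(K)$ has as states the initial traces of $K$, initial state $s_0$, labelling $\rho\mapsto\mu(\text{last state of }\rho)$, transitions $(\rho,\rho\cdot s)$. $\mathrm{HS}$ formulas: $\psi::=p\mid\neg\psi\mid\psi\wedge\psi\mid\langle X\rangle\psi$ for the Allen relations $A,L,B,E,D,O$ and inverses; all definable (non-strict semantics) from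 $\langle B\rangle,\langle E\rangle,\langle\bar B\rangle,\langle\bar E\rangle$. State-based semantics over traces: $\rho\models q$ iff $q\in\mu(s)$ for every state $s$ of $\rho$; $\langle B\rangle\psi$: some $\rho'\in\mathrm{Pref}(\rho)$ satisfies $\psi$; $\langle E\rangle\psi$: some $\rho'\in\mathrm{Suff}(\rho)$; $\langle\bar B\rangle\psi$: some trace $\rho'$ with $\rho\in\mathrm{Pref}(\rho')$; $\langle\bar E\rangle\psi$: some trace $\rho'$ with $\rho\in\mathrm{Suff}(\rho')$. $K\models_{\mathsf{st}}\psi$ iff every initial trace satisfies $\psi$; $K\models_{\mathsf{ct}}\psi$ iff $C(K)\models_{\mathsf{st}}\psi$. *)

theory Defs
  imports Main
begin

record ('s, 'ap) kripke =
  states :: "'s set"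
  trans  :: "('s \<times> 's) set"
  lab    :: "'s \<Rightarrow> 'ap set"
  init   :: 's

definition kripke :: "('s, 'ap) kripke \<Rightarrow> bool" where
  "kripke K \<longleftrightarrow> init K \<in> states K \<and> trans K \<subseteq> states K \<times> states K
     \<and> (\<forall>s \<in> states K. \<exists>t. (s, t) \<in> trans K)"

definition finite_kripke :: "('s, 'ap) kripke \<Rightarrow> bool" where
  "finite_kripke K \<longleftrightarrow> kripke K \<and> finite (states K)"

definition is_trace :: "('s, 'ap) kripke \<Rightarrow> 's list \<Rightarrow> bool" where
  "is_trace K \<rho> \<longleftrightarrow> \<rho> \<noteq> [] \<and> set \<rho> \<subseteq> states K
     \<and> (\<forall>i. Suc i < length \<rho> \<longrightarrow> (\<rho> ! i, \<rho> ! Suc i) \<in> trans K)"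

definition initial_trace :: "('s, 'ap) kripke \<Rightarrow> 's list \<Rightarrow> bool" where
  "initial_trace K \<rho> \<longleftrightarrow> is_trace K \<rho> \<and> hd \<rho> = init K"

definition initial_path :: "('s, 'ap) kripke \<Rightarrow> (nat \<Rightarrow> 's) \<Rightarrow> bool" where
  "initial_path K \<pi> \<longleftrightarrow> \<pi> 0 = init K \<and> (\<forall>i. \<pi> i \<in> states K \<and> (\<pi> i, \<pi> (Suc i)) \<in> trans K)"

definition models_F :: "('s, 'ap) kripke \<Rightarrow> 'ap \<Rightarrow> bool" where
  "models_F K p \<longleftrightarrow> (\<forall>\<pi>. initial_path K \<pi> \<longrightarrow> (\<exists>i. p \<in> lab K (\<pi> i)))"

definition Pref :: "'a list \<Rightarrow> 'a list set" where
  "Pref w = {take i w | i. 1 \<le> i \<and> i < length w}"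

definition Suff :: "'a list \<Rightarrow> 'a list set" where
  "Suff w = {drop i w | i. 1 \<le> i \<and> i < length w}"

text \<open>HS formulas over the basic modalities B, E, Bbar, Ebar (all other Allen
  modalities are definable from these under the non-strict semantics).\<close>

datatype 'ap hs =
    Prop 'ap
  | Neg "'ap hs"
  | Conj "'ap hs" "'ap hs"
  | DiaB "'ap hs"
  | DiaE "'ap hs"
  | DiaBbar "'ap hs"
  | DiaEbar "'ap hs"

fun hs_sat :: "('s, 'ap) kripke \<Rightarrow> 's list \<Rightarrow> 'ap hs \<Rightarrow> bool" where
  "hs_sat K \<rho> (Prop q) \<longleftrightarrow> (\<forall>s \<in> set \<rho>. q \<in> lab K s)"
| "hs_sat K \<rho> (Neg \<psi>) \<longleftrightarrow> \<not> hs_sat K \<rho> \<psi>"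
| "hs_sat K \<rho> (Conj \<psi> \<phi>) \<longleftrightarrow> hs_sat K \<rho> \<psi> \<and> hs_sat K \<rho> \<phi>"
| "hs_sat K \<rho> (DiaB \<psi>) \<longleftrightarrow> (\<exists>\<rho>' \<in> Pref \<rho>. hs_sat K \<rho>' \<psi>)"
| "hs_sat K \<rho> (DiaE \<psi>) \<longleftrightarrow> (\<exists>\<rho>' \<in> Suff \<rho>. hs_sat K \<rho>' \<psi>)"
| "hs_sat K \<rho> (DiaBbar \<psi>) \<longleftrightarrow> (\<exists>\<rho>'. is_trace K \<rho>' \<and> \<rho> \<in> Pref \<rho>' \<and> hs_sat K \<rho>' \<psi>)"
| "hs_sat K \<rho> (DiaEbar \<psi>) \<longleftrightarrow> (\<exists>\<rho>'. is_trace K \<rho>' \<and> \<rho> \<in> Suff \<rho>' \<and> hs_sat K \<rho>' \<psi>)"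

definition models_st :: "('s, 'ap) kripke \<Rightarrow> 'ap hs \<Rightarrow> bool" where
  "models_st K \<psi> \<longleftrightarrow> (\<forall>\<rho>. initial_trace K \<rho> \<longrightarrow> hs_sat K \<rho> \<psi>)"

definition comp_tree :: "('s, 'ap) kripke \<Rightarrow> ('s list, 'ap) kripke" where
  "comp_tree K = \<lparr> states = {\<rho>. initial_trace K \<rho>},
                  trans = {(\<rho>, \<rho> @ [s]) | \<rho> s. initial_trace K \<rho> \<and> initial_trace K (\<rho> @ [s])},
                  lab = (\<lambda>\<rho>. lab K (last \<rho>)),
                  init = [init K] \<rparr>"

definition models_ct :: "('s, 'ap) kripke \<Rightarrow> 'ap hs \<Rightarrow> bool" where
  "models_ct K \<psi> \<longleftrightarrow> models_st (comp_tree K) \<psi>"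

end

theory Submission
  imports Defs
begin

definition ts :: "nat \<Rightarrow> int \<Rightarrow> int" where
  "ts N x = max (- int N) (min (int N) x)"

definition TDl :: "nat \<Rightarrow> int list \<Rightarrow> int list \<Rightarrow> bool" where
  "TDl N xs ys \<longleftrightarrow> length xs = length ys \<and>
     (\<forall>i<length xs. \<forall>j<length xs. ts N (xs!j - xs!i) = ts N (ys!j - ys!i))"

lemma ts_pos: "N \<ge> 1 \<Longrightarrow> ts N x = ts N y \<Longrightarrow> (0 < x \<longleftrightarrow> 0 < y)"
  unfolding ts_def by (auto simp: max_def min_def split: if_splits)

lemma ts_nonneg: "N \<ge> 1 \<Longrightarrow> ts N x = ts N y \<Longrightarrow> (0 \<le> x \<longleftrightarrow> 0 \<le> y)"
  unfolding ts_def by (auto simp: max_def min_def split: if_splits)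

lemma ts_mono: "N \<le> M \<Longrightarrow> ts M x = ts M y \<Longrightarrow> ts N x = ts N y"
  unfolding ts_def by (auto simp: max_def min_def split: if_splits)

lemma ts_neg: "ts N (- x) = - ts N x"
  unfolding ts_def by (auto simp: max_def min_def)

lemma TDl_nth: "TDl N xs ys \<Longrightarrow> i < length xs \<Longrightarrow> j < length xs \<Longrightarrow>
   ts N (xs!j - xs!i) = ts N (ys!j - ys!i)"
  unfolding TDl_def by blast

lemma TDl_sym: "TDl N xs ys \<Longrightarrow> TDl N ys xs"
  unfolding TDl_def by auto

lemma TDl_trans: "TDl N xs ys \<Longrightarrow> TDl N ys zs \<Longrightarrow> TDl N xs zs"
  unfolding TDl_def by auto

lemma TDl_mono: "N \<le> M \<Longrightarrow> TDl M xs ys \<Longrightarrow> TDl N xs ys"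
  unfolding TDl_def using ts_mono by metis

lemma TDl_sub: "TDl N xs ys \<Longrightarrow> \<forall>k\<in>set is. k < length xs \<Longrightarrow>
    TDl N (map ((!) xs) is) (map ((!) ys) is)"
  unfolding TDl_def by auto

lemma point_near:
  assumes "ts (2*N+1) (x0 - x) = ts (2*N+1) (x0' - x')" "\<bar>d\<bar> < int N"
  shows "ts N (d + x0 - x) = ts N (d + x0' - x')"
  using assms unfolding ts_def by (auto simp: max_def min_def split: if_splits)

lemma point_lemma_set:
  fixes S :: "(int \<times> int) set"
  assumes fin: "finite S" and ne: "S \<noteq> {}" and N: "N \<ge> 1"
    and H: "\<forall>(x,x')\<in>S. \<forall>(z,z')\<in>S. ts (2*N+1) (z - x) = ts (2*N+1) (z' - x')"
  shows "\<exists>y'. \<forall>(x,x')\<in>S. ts N (y - x) = ts N (y' - x')"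
proof (cases "\<exists>(x0,x0')\<in>S. \<bar>y - x0\<bar> < int N")
  case True
  then obtain x0 x0' where in0: "(x0,x0') \<in> S" and near: "\<bar>y - x0\<bar> < int N" by blast
  show ?thesis
  proof (intro exI[of _ "x0' + (y - x0)"] ballI, clarify)
    fix x x' assume "(x,x') \<in> S"
    with in0 H have "ts (2*N+1) (x0 - x) = ts (2*N+1) (x0' - x')" by blast
    from point_near[OF this near] show "ts N (y - x) = ts N (x0' + (y - x0) - x')"
      by (simp add: algebra_simps)
  qed
next
  case False
  hence far: "\<forall>(x,x')\<in>S. \<bar>y - x\<bar> \<ge> int N" by auto
  show ?thesis
  proof (cases "\<exists>(x,x')\<in>S. x < y")
    case True
    define B where "B = {p\<in>S. fst p < y}"
    have finB: "finite (fst ` B)" using fin B_def by auto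
    have neB: "fst ` B \<noteq> {}" using True B_def by force
    define m where "m = Max (fst ` B)"
    have "m \<in> fst ` B" using finB neB m_def by simp
    then obtain m' where mS: "(m,m') \<in> S" and my: "m < y" unfolding B_def by force
    have mmax: "\<And>x x'. (x,x') \<in> S \<Longrightarrow> x < y \<Longrightarrow> x \<le> m"
    proof -
      fix x x' assume "(x,x') \<in> S" "x < y"
      hence "x \<in> fst ` B" unfolding B_def by force
      thus "x \<le> m" unfolding m_def using finB by simp
    qed
    have mfar: "y - m \<ge> int N" using far mS my by force
    show ?thesis
    proof (intro exI[of _ "m' + int N"] ballI, clarify)
      fix x x' assume xS: "(x,x') \<in> S"
      have Hx: "ts (2*N+1) (m - x) = ts (2*N+1) (m' - x')" using H xS mS by blast
      show "ts N (y - x) = ts N (m' + int N - x')"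
      proof (cases "x < y")
        case True
        hence "x \<le> m" using mmax xS by blast
        hence "m' - x' \<ge> 0" using ts_nonneg[OF _ Hx] by simp
        moreover have "y - x \<ge> int N" using mfar \<open>x \<le> m\<close> by simp
        ultimately show ?thesis unfolding ts_def by (simp add: max_def min_def)
      next
        case False
        hence "x \<ge> y + int N" using far xS by force
        hence "m - x \<le> - 2 * int N" using mfar by simp
        hence "m' - x' \<le> - 2 * int N" using Hx unfolding ts_def
          by (auto simp: max_def min_def split: if_splits)
        thus ?thesis using \<open>x \<ge> y + int N\<close> unfolding ts_def by (simp add: max_def min_def)
      qed
    qed
  next
    case False
    hence above: "\<forall>(x,x')\<in>S. x \<ge> y + int N" using far by force
    define m where "m = Min (fst ` S)"
    have finS: "finite (fst ` S)" using fin by simp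
    have "m \<in> fst ` S" using finS ne m_def by simp
    then obtain m' where mS: "(m,m') \<in> S" by force
    have mmin: "\<And>x x'. (x,x') \<in> S \<Longrightarrow> m \<le> x"
    proof -
      fix x x' assume "(x,x') \<in> S"
      hence "x \<in> fst ` S" by force
      thus "m \<le> x" unfolding m_def using finS by simp
    qed
    show ?thesis
    proof (intro exI[of _ "m' - int N"] ballI, clarify)
      fix x x' assume xS: "(x,x') \<in> S"
      have Hx: "ts (2*N+1) (x - m) = ts (2*N+1) (x' - m')" using H xS mS by blast
      have "x - m \<ge> 0" using mmin xS by simp
      hence "x' - m' \<ge> 0" using ts_nonneg[OF _ Hx] by simp
      moreover have "x - y \<ge> int N" using above xS by force
      ultimately show "ts N (y - x) = ts N (m' - int N - x')" unfolding ts_def by (simp add: max_def min_def)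
    qed
  qed
qed

lemma point_lemma:
  assumes "TDl M xs ys" "xs \<noteq> []" "N \<ge> 1" "2*N+1 \<le> M"
  shows "\<exists>y'. TDl N (xs@[y]) (ys@[y'])"
proof -
  let ?S = "set (zip xs ys)"
  have len: "length xs = length ys" using assms(1) TDl_def by auto
  have H: "\<forall>(x,x')\<in>?S. \<forall>(z,z')\<in>?S. ts (2*N+1) (z - x) = ts (2*N+1) (z' - x')"
  proof (clarify)
    fix x x' z z' assume "(x,x') \<in> ?S" "(z,z') \<in> ?S"
    then obtain i j where "i < length xs" "j < length xs" "x = xs!i" "x' = ys!i" "z = xs!j" "z' = ys!j"
      using len by (auto simp: in_set_zip)
    thus "ts (2*N+1) (z - x) = ts (2*N+1) (z' - x')"
      using assms(1,4) TDl_nth ts_mono by metis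
  qed
  have "?S \<noteq> {}" using assms(2) len by (cases xs; cases ys) auto
  from point_lemma_set[OF _ this assms(3) H] obtain y' where
    Y: "\<forall>(x,x')\<in>?S. ts N (y - x) = ts N (y' - x')" by blast
  have Yi: "\<And>i. i < length xs \<Longrightarrow> ts N (y - xs!i) = ts N (y' - ys!i)"
  proof -
    fix i assume "i < length xs"
    hence "(xs!i, ys!i) \<in> ?S" using len by (auto simp: in_set_zip)
    thus "ts N (y - xs!i) = ts N (y' - ys!i)" using Y by blast
  qed
  have TN: "TDl N xs ys" by (rule TDl_mono[OF _ assms(1)]) (use assms(4) in simp)
  show ?thesis
    unfolding TDl_def
  proof (intro exI conjI allI impI)
    show "length (xs @ [y]) = length (ys @ [y'])" using len by simp
    fix i j assume i: "i < length (xs@[y])" and j: "j < length (xs@[y])"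
    show "ts N ((xs @ [y]) ! j - (xs @ [y]) ! i) = ts N ((ys @ [y']) ! j - (ys @ [y']) ! i)"
    proof (cases "i < length xs"; cases "j < length xs")
      assume "i < length xs" "j < length xs"
      thus ?thesis using TN TDl_nth len by (simp add: nth_append)
    next
      assume "i < length xs" "\<not> j < length xs"
      hence "j = length xs" using j by simp
      thus ?thesis using Yi[OF \<open>i < length xs\<close>] len \<open>i < length xs\<close> by (simp add: nth_append)
    next
      assume "\<not> i < length xs" "j < length xs"
      hence "i = length xs" using i by simp
      thus ?thesis using Yi[OF \<open>j < length xs\<close>] len ts_neg \<open>j < length xs\<close>
        by (simp add: nth_append) (metis minus_diff_eq)
    next
      assume "\<not> i < length xs" "\<not> j < length xs"
      thus ?thesis using i j len by (simp add: nth_append)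
    qed
  qed
qed

fun hdepth :: "'ap hs \<Rightarrow> nat" where
  "hdepth (Prop q) = 0"
| "hdepth (Neg \<psi>) = hdepth \<psi>"
| "hdepth (Conj \<psi> \<phi>) = max (hdepth \<psi>) (hdepth \<phi>)"
| "hdepth (DiaB \<psi>) = Suc (hdepth \<psi>)"
| "hdepth (DiaE \<psi>) = Suc (hdepth \<psi>)"
| "hdepth (DiaBbar \<psi>) = Suc (hdepth \<psi>)"
| "hdepth (DiaEbar \<psi>) = Suc (hdepth \<psi>)"

lemma EF:
  fixes K1 :: "('s1,'ap) kripke" and K2 :: "('s2,'ap) kripke"
  assumes P: "\<And>d r s q. Z d r s \<Longrightarrow> hs_sat K1 r (Prop q) = hs_sat K2 s (Prop q)"
  and B1: "\<And>d r s r'. Z (Suc d) r s \<Longrightarrow> r' \<in> Pref r \<Longrightarrow> \<exists>s'\<in>Pref s. Z d r' s'"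
  and B2: "\<And>d r s s'. Z (Suc d) r s \<Longrightarrow> s' \<in> Pref s \<Longrightarrow> \<exists>r'\<in>Pref r. Z d r' s'"
  and E1: "\<And>d r s r'. Z (Suc d) r s \<Longrightarrow> r' \<in> Suff r \<Longrightarrow> \<exists>s'\<in>Suff s. Z d r' s'"
  and E2: "\<And>d r s s'. Z (Suc d) r s \<Longrightarrow> s' \<in> Suff s \<Longrightarrow> \<exists>r'\<in>Suff r. Z d r' s'"
  and Bb1: "\<And>d r s r'. Z (Suc d) r s \<Longrightarrow> is_trace K1 r' \<Longrightarrow> r \<in> Pref r' \<Longrightarrow>
              \<exists>s'. is_trace K2 s' \<and> s \<in> Pref s' \<and> Z d r' s'"
  and Bb2: "\<And>d r s s'. Z (Suc d) r s \<Longrightarrow> is_trace K2 s' \<Longrightarrow> s \<in> Pref s' \<Longrightarrow>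
              \<exists>r'. is_trace K1 r' \<and> r \<in> Pref r' \<and> Z d r' s'"
  and Eb1: "\<And>d r s r'. Z (Suc d) r s \<Longrightarrow> is_trace K1 r' \<Longrightarrow> r \<in> Suff r' \<Longrightarrow>
              \<exists>s'. is_trace K2 s' \<and> s \<in> Suff s' \<and> Z d r' s'"
  and Eb2: "\<And>d r s s'. Z (Suc d) r s \<Longrightarrow> is_trace K2 s' \<Longrightarrow> s \<in> Suff s' \<Longrightarrow>
              \<exists>r'. is_trace K1 r' \<and> r \<in> Suff r' \<and> Z d r' s'"
  shows "Z d r s \<Longrightarrow> hdepth \<psi> \<le> d \<Longrightarrow> hs_sat K1 r \<psi> = hs_sat K2 s \<psi>"
proof (induction \<psi> arbitrary: d r s)
  case (Prop q) thus ?case using P by blast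
next
  case (Neg \<psi>) thus ?case by simp
next
  case (Conj \<psi> \<phi>) thus ?case by simp
next
  case (DiaB \<psi>)
  then obtain d0 where d: "d = Suc d0" "hdepth \<psi> \<le> d0" by (cases d) auto
  show ?case using DiaB.IH B1[of d0 r s] B2[of d0 r s] DiaB.prems d by simp metis
next
  case (DiaE \<psi>)
  then obtain d0 where d: "d = Suc d0" "hdepth \<psi> \<le> d0" by (cases d) auto
  show ?case using DiaE.IH E1[of d0 r s] E2[of d0 r s] DiaE.prems d by simp metis
next
  case (DiaBbar \<psi>)
  then obtain d0 where d: "d = Suc d0" "hdepth \<psi> \<le> d0" by (cases d) auto
  show ?case using DiaBbar.IH Bb1[of d0 r s] Bb2[of d0 r s] DiaBbar.prems d by simp metis
next
  case (DiaEbar \<psi>)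
  then obtain d0 where d: "d = Suc d0" "hdepth \<psi> \<le> d0" by (cases d) auto
  show ?case using DiaEbar.IH Eb1[of d0 r s] Eb2[of d0 r s] DiaEbar.prems d by simp metis
qed

definition cc :: "nat \<Rightarrow> int" where "cc n = int n + 2"
definition clip :: "nat \<Rightarrow> int \<Rightarrow> nat" where "clip n x = nat (min (max x 0) (int n + 2))"
definition C :: "nat \<Rightarrow> int \<Rightarrow> int \<Rightarrow> nat list" where
  "C n a e = map (\<lambda>k. clip n (a + int k)) [0..<nat (e - a)]"
definition MT :: "nat \<Rightarrow> (nat \<times> nat) set" where
  "MT n = {(x,y). x \<le> n+2 \<and> (y = min (x+1) (n+2) \<or> (x = 0 \<and> y = 0))}"
definition Mk :: "nat \<Rightarrow> nat \<Rightarrow> (nat,'ap) kripke" where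
  "Mk n s = \<lparr>states = {0..n+2},
     trans = MT n,
     lab = (\<lambda>x. if x = n+2 then UNIV else {}), init = s\<rparr>"

lemma Mk_simps[simp]: "states (Mk n s) = {0..n+2}"
  "trans (Mk n s) = MT n"
  "lab (Mk n s) = (\<lambda>x. if x = n+2 then UNIV else {})" "init (Mk n s) = s"
  by (simp_all add: Mk_def)

lemma length_C[simp]: "length (C n a e) = nat (e - a)"
  by (simp add: C_def)

lemma nth_C[simp]: "k < nat (e - a) \<Longrightarrow> C n a e ! k = clip n (a + int k)"
  by (simp add: C_def)

lemma clip_le: "clip n x \<le> n + 2"
  by (simp add: clip_def)

lemma clip_le'[simp]: "clip n x \<le> Suc (Suc n)"
  by (simp add: clip_def)

lemma take_C: "a \<le> y \<Longrightarrow> y \<le> e \<Longrightarrow> take (nat (y - a)) (C n a e) = C n a y"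
  by (rule nth_equalityI) (auto simp: min_def split: if_splits)

lemma drop_C: "a \<le> y \<Longrightarrow> y \<le> e \<Longrightarrow> drop (nat (y - a)) (C n a e) = C n y e"
  by (rule nth_equalityI) (auto simp: algebra_simps)

lemma C_Cons: "a < e \<Longrightarrow> C n a e = clip n a # C n (a+1) e"
  by (rule nth_equalityI) (auto simp: nth_Cons algebra_simps split: nat.splits)

lemma hd_C: "a < e \<Longrightarrow> hd (C n a e) = clip n a"
  by (simp add: C_Cons)

lemma clip_top: "cc n \<le> x \<Longrightarrow> clip n x = n + 2"
  by (simp add: clip_def cc_def)

lemma C_allq: "cc n \<le> a \<Longrightarrow> cc n \<le> b \<Longrightarrow> C n a (a + L) = C n b (b + L)"
  by (rule nth_equalityI) (auto simp: clip_top)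

definition istr :: "nat \<Rightarrow> nat list \<Rightarrow> bool" where
  "istr n \<rho> \<longleftrightarrow> \<rho> \<noteq> [] \<and> set \<rho> \<subseteq> {0..n+2} \<and> (\<forall>i. Suc i < length \<rho> \<longrightarrow> (\<rho> ! i, \<rho> ! Suc i) \<in> MT n)"

lemma is_trace_Mk: "is_trace (Mk n s) \<rho> = istr n \<rho>"
  by (simp add: is_trace_def istr_def)

lemma trans_clip: "(clip n x, clip n (x+1)) \<in> MT n"
  by (auto simp: clip_def MT_def)

lemma trace_C: "a < e \<Longrightarrow> istr n (C n a e)"
  unfolding istr_def
proof (intro conjI allI impI)
  assume "a < e" thus "C n a e \<noteq> []" by (simp add: C_Cons)
  show "set (C n a e) \<subseteq> {0..n+2}" by (auto simp: C_def clip_le)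
  fix i assume "Suc i < length (C n a e)"
  thus "(C n a e ! i, C n a e ! Suc i) \<in> MT n"
    using trans_clip[of n "a + int i"] by (simp add: algebra_simps)
qed

lemma trace_char: "istr n \<rho> \<Longrightarrow> \<exists>a e. a < e \<and> \<rho> = C n a e"
proof (induction \<rho>)
  case Nil thus ?case by (simp add: istr_def)
next
  case (Cons x \<rho>)
  show ?case
  proof (cases "\<rho> = []")
    case True
    have "x \<le> n+2" using Cons.prems by (auto simp: istr_def)
    hence "x # \<rho> = C n (int x) (int x + 1)" using True
      by (simp add: C_Cons) (simp add: C_def clip_def)
    thus ?thesis by (intro exI[of _ "int x"] exI[of _ "int x + 1"]) simp
  next
    case False
    have TT: "\<And>i. Suc i < length (x#\<rho>) \<Longrightarrow> ((x#\<rho>) ! i, (x#\<rho>) ! Suc i) \<in> MT n"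
      using Cons.prems unfolding istr_def by blast
    have tr: "istr n \<rho>" unfolding istr_def
    proof (intro conjI allI impI)
      show "\<rho> \<noteq> []" by fact
      show "set \<rho> \<subseteq> {0..n+2}" using Cons.prems unfolding istr_def by auto
      fix i assume "Suc i < length \<rho>"
      hence "Suc (Suc i) < length (x#\<rho>)" by simp
      hence "((x#\<rho>) ! Suc i, (x#\<rho>) ! Suc (Suc i)) \<in> MT n"
        by (rule TT)
      thus "(\<rho> ! i, \<rho> ! Suc i) \<in> MT n" by simp
    qed
    then obtain a e where ae: "a < e" and a: "\<rho> = C n a e" using Cons.IH by blast
    have "Suc 0 < length (x#\<rho>)" using False by simp
    hence "((x#\<rho>) ! 0, (x#\<rho>) ! Suc 0) \<in> MT n"
      by (rule TT)
    hence "(x, \<rho> ! 0) \<in> MT n" by simp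
    moreover have "\<rho> ! 0 = clip n a" using a ae by (simp add: C_Cons)
    ultimately have tx: "x \<le> n+2" "clip n a = min (x+1) (n+2) \<or> (x = 0 \<and> clip n a = 0)" by (auto simp: MT_def)
    show ?thesis
    proof (cases "x = clip n (a - 1)")
      case True
      hence "x # \<rho> = C n (a-1) e" using a ae by (subst C_Cons) auto
      thus ?thesis using ae by (intro exI[of _ "a-1"] exI[of _ e]) simp
    next
      case False
      hence ca: "cc n \<le> a" using tx by (auto simp: clip_def cc_def split: if_splits)
      hence aq: "\<rho> = C n (cc n) (cc n + (e - a))" using a C_allq[OF ca order_refl, of "e - a"] by simp
      have "clip n a = n + 2" using ca clip_top by blast
      hence "x = n+1 \<or> x = n+2" using tx by (auto simp: min_def split: if_splits)
      thus ?thesis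
      proof
        assume "x = n+1"
        hence "x = clip n (cc n - 1)" by (simp add: clip_def cc_def)
        hence "x # \<rho> = C n (cc n - 1) (cc n + (e - a))" using aq ae by (subst C_Cons) auto
        thus ?thesis using ae by (intro exI[of _ "cc n - 1"] exI[of _ "cc n + (e - a)"]) simp
      next
        assume "x = n+2"
        have q: "C n (cc n + 1) (cc n + 1 + (e - a)) = C n (cc n) (cc n + (e - a))"
          using C_allq[of n "cc n + 1" "cc n" "e - a"] by simp
        have "C n (cc n) (cc n + 1 + (e - a)) = clip n (cc n) # C n (cc n + 1) (cc n + 1 + (e - a))"
          using ae by (subst C_Cons) auto
        hence "x # \<rho> = C n (cc n) (cc n + 1 + (e - a))" using aq q \<open>x = n+2\<close> clip_top[of n "cc n"] by simp
        thus ?thesis using ae by (intro exI[of _ "cc n"] exI[of _ "cc n + 1 + (e - a)"]) simp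
      qed
    qed
  qed
qed

lemma C_rep:
  assumes ae: "a < e" and eq: "C n a e = C n a2 (a2 + (e - a))"
  shows "a = a2 \<or> (e \<le> 1 \<and> a2 + (e - a) \<le> 1) \<or> (cc n \<le> a \<and> cc n \<le> a2)"
proof -
  have E: "\<And>k. k < nat (e - a) \<Longrightarrow> clip n (a + int k) = clip n (a2 + int k)"
  proof -
    fix k assume k: "k < nat (e - a)"
    have "C n a e ! k = C n a2 (a2 + (e - a)) ! k" using eq by simp
    thus "clip n (a + int k) = clip n (a2 + int k)" using k by simp
  qed
  show ?thesis
  proof (cases "\<exists>k < nat (e - a). 1 \<le> a + int k \<and> a + int k \<le> int n + 1")
    case True
    then obtain k where k: "k < nat (e - a)" "1 \<le> a + int k" "a + int k \<le> int n + 1" by blast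
    have "clip n (a2 + int k) = nat (a + int k)" using E[OF k(1)] k by (simp add: clip_def)
    hence "a2 + int k = a + int k" using k unfolding clip_def by (simp add: min_def max_def split: if_splits)
    thus ?thesis by simp
  next
    case False
    have k0: "0 < nat (e - a)" using ae by simp
    have kl: "nat (e - a) - 1 < nat (e - a)" using ae by simp
    have E0: "clip n a = clip n a2" using E[OF k0] by simp
    have El: "clip n (e - 1) = clip n (a2 + (e - a) - 1)" using E[OF kl] ae by (simp add: algebra_simps)
    show ?thesis
    proof (cases "a \<le> 0")
      case True
      have "e - 1 \<le> 0"
      proof (rule ccontr)
        assume "\<not> e - 1 \<le> 0"
        hence "nat (1 - a) < nat (e - a)" "1 \<le> a + int (nat (1 - a))" "a + int (nat (1 - a)) \<le> int n + 1"
          using True by auto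
        thus False using False by blast
      qed
      hence "clip n (e - 1) = 0" by (simp add: clip_def)
      hence "a2 + (e - a) - 1 \<le> 0" using El by (simp add: clip_def)
      thus ?thesis using \<open>e - 1 \<le> 0\<close> by simp
    next
      case False
      hence "cc n \<le> a" using \<open>\<not> (\<exists>k < nat (e - a). _)\<close> k0 by (force simp: cc_def)
      hence "clip n a2 = n + 2" using E0 clip_top by simp
      hence "cc n \<le> a2" by (simp add: clip_def cc_def)
      thus ?thesis using \<open>cc n \<le> a\<close> by simp
    qed
  qed
qed

lemma Pref_C: "\<rho>' \<in> Pref (C n a e) \<longleftrightarrow> (\<exists>y. a < y \<and> y < e \<and> \<rho>' = C n a y)"
proof
  assume "\<rho>' \<in> Pref (C n a e)"
  then obtain i where i: "1 \<le> i" "i < nat (e - a)" "\<rho>' = take i (C n a e)" by (auto simp: Pref_def)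
  hence "\<rho>' = C n a (a + int i)" using take_C[of a "a + int i" e n] by simp
  thus "\<exists>y. a < y \<and> y < e \<and> \<rho>' = C n a y" using i by (intro exI[of _ "a + int i"]) auto
next
  assume "\<exists>y. a < y \<and> y < e \<and> \<rho>' = C n a y"
  then obtain y where y: "a < y" "y < e" "\<rho>' = C n a y" by blast
  hence "\<rho>' = take (nat (y - a)) (C n a e)" using take_C[of a y e n] by simp
  thus "\<rho>' \<in> Pref (C n a e)" unfolding Pref_def using y by (intro CollectI exI[of _ "nat (y - a)"]) auto
qed

lemma Suff_C: "\<rho>' \<in> Suff (C n a e) \<longleftrightarrow> (\<exists>y. a < y \<and> y < e \<and> \<rho>' = C n y e)"
proof
  assume "\<rho>' \<in> Suff (C n a e)"
  then obtain i where i: "1 \<le> i" "i < nat (e - a)" "\<rho>' = drop i (C n a e)" by (auto simp: Suff_def)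
  hence "\<rho>' = C n (a + int i) e" using drop_C[of a "a + int i" e n] by simp
  thus "\<exists>y. a < y \<and> y < e \<and> \<rho>' = C n y e" using i by (intro exI[of _ "a + int i"]) auto
next
  assume "\<exists>y. a < y \<and> y < e \<and> \<rho>' = C n y e"
  then obtain y where y: "a < y" "y < e" "\<rho>' = C n y e" by blast
  hence "\<rho>' = drop (nat (y - a)) (C n a e)" using drop_C[of a y e n] by simp
  thus "\<rho>' \<in> Suff (C n a e)" unfolding Suff_def using y by (intro CollectI exI[of _ "nat (y - a)"]) auto
qed

lemma clip_mono: "x \<le> y \<Longrightarrow> clip n x \<le> clip n y"
  by (simp add: clip_def)

lemma Prop_C: "a < e \<Longrightarrow> (\<forall>s\<in>set (C n a e). q \<in> lab (Mk n s0) s) \<longleftrightarrow> cc n \<le> a"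
proof
  assume ae: "a < e" and H: "\<forall>s\<in>set (C n a e). q \<in> lab (Mk n s0) s"
  have "clip n a \<in> set (C n a e)" using ae by (simp add: C_Cons)
  hence "clip n a = n + 2" using H by (auto split: if_splits)
  thus "cc n \<le> a" by (simp add: clip_def cc_def)
next
  assume ae: "a < e" and ca: "cc n \<le> a"
  show "\<forall>s\<in>set (C n a e). q \<in> lab (Mk n s0) s"
    using ca by (auto simp: C_def clip_top)
qed

lemma Bbar_C:
  assumes "istr n r" "C n a e \<in> Pref r" "a < e"
  shows "\<exists>a3 e3. r = C n a3 e3 \<and> C n a e = C n a3 (a3 + (e - a)) \<and> a3 + (e - a) < e3"
proof -
  obtain a3 e3 where r: "a3 < e3" "r = C n a3 e3" using trace_char assms(1) by blast
  then obtain y where y: "a3 < y" "y < e3" "C n a e = C n a3 y" using assms(2) Pref_C by blast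
  have "nat (e - a) = nat (y - a3)" using arg_cong[OF y(3), of length] by simp
  hence "y = a3 + (e - a)" using y assms(3) by simp
  thus ?thesis using r y by blast
qed

lemma Ebar_C:
  assumes "istr n r" "C n a e \<in> Suff r" "a < e"
  shows "\<exists>a3 e3. r = C n a3 e3 \<and> C n a e = C n (e3 - (e - a)) e3 \<and> a3 < e3 - (e - a)"
proof -
  obtain a3 e3 where r: "a3 < e3" "r = C n a3 e3" using trace_char assms(1) by blast
  then obtain y where y: "a3 < y" "y < e3" "C n a e = C n y e3" using assms(2) Suff_C by blast
  have "nat (e - a) = nat (e3 - y)" using arg_cong[OF y(3), of length] by simp
  hence "y = e3 - (e - a)" using y assms(3) by simp
  thus ?thesis using r y by blast
qed

lemma ts_flip: "ts N (x - y) = ts N (x' - y') \<Longrightarrow> ts N (y - x) = ts N (y' - x')"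
  by (metis minus_diff_eq ts_neg)

lemma allS: "(\<forall>i<Suc k. Q (i::nat)) \<longleftrightarrow> Q k \<and> (\<forall>i<k. Q i)"
  by (auto simp: less_Suc_eq)

lemma TDl3_iff: "TDl N [x0,x1,x2] [y0,y1,y2] \<longleftrightarrow>
  ts N (x1 - x0) = ts N (y1 - y0) \<and> ts N (x2 - x0) = ts N (y2 - y0) \<and> ts N (x2 - x1) = ts N (y2 - y1)"
proof
  assume "TDl N [x0,x1,x2] [y0,y1,y2]"
  thus "ts N (x1 - x0) = ts N (y1 - y0) \<and> ts N (x2 - x0) = ts N (y2 - y0) \<and> ts N (x2 - x1) = ts N (y2 - y1)"
    unfolding TDl_def by (simp add: allS)
next
  assume h: "ts N (x1 - x0) = ts N (y1 - y0) \<and> ts N (x2 - x0) = ts N (y2 - y0) \<and> ts N (x2 - x1) = ts N (y2 - y1)"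
  hence "ts N (x0 - x1) = ts N (y0 - y1)" "ts N (x0 - x2) = ts N (y0 - y2)" "ts N (x1 - x2) = ts N (y1 - y2)"
    using ts_flip by blast+
  thus "TDl N [x0,x1,x2] [y0,y1,y2]" using h unfolding TDl_def by (simp add: allS)
qed

lemma TDl4_iff: "TDl N [x0,x1,x2,x3] [y0,y1,y2,y3] \<longleftrightarrow>
  ts N (x1 - x0) = ts N (y1 - y0) \<and> ts N (x2 - x0) = ts N (y2 - y0) \<and> ts N (x2 - x1) = ts N (y2 - y1) \<and>
  ts N (x3 - x0) = ts N (y3 - y0) \<and> ts N (x3 - x1) = ts N (y3 - y1) \<and> ts N (x3 - x2) = ts N (y3 - y2)"
proof
  assume "TDl N [x0,x1,x2,x3] [y0,y1,y2,y3]"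
  thus "ts N (x1 - x0) = ts N (y1 - y0) \<and> ts N (x2 - x0) = ts N (y2 - y0) \<and> ts N (x2 - x1) = ts N (y2 - y1) \<and>
  ts N (x3 - x0) = ts N (y3 - y0) \<and> ts N (x3 - x1) = ts N (y3 - y1) \<and> ts N (x3 - x2) = ts N (y3 - y2)"
    unfolding TDl_def by (simp add: allS)
next
  assume h: "ts N (x1 - x0) = ts N (y1 - y0) \<and> ts N (x2 - x0) = ts N (y2 - y0) \<and> ts N (x2 - x1) = ts N (y2 - y1) \<and>
  ts N (x3 - x0) = ts N (y3 - y0) \<and> ts N (x3 - x1) = ts N (y3 - y1) \<and> ts N (x3 - x2) = ts N (y3 - y2)"
  hence "ts N (x0 - x1) = ts N (y0 - y1)" "ts N (x0 - x2) = ts N (y0 - y2)" "ts N (x1 - x2) = ts N (y1 - y2)"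
    "ts N (x0 - x3) = ts N (y0 - y3)" "ts N (x1 - x3) = ts N (y1 - y3)" "ts N (x2 - x3) = ts N (y2 - y3)"
    using ts_flip by blast+
  thus "TDl N [x0,x1,x2,x3] [y0,y1,y2,y3]" using h unfolding TDl_def by (simp add: allS)
qed

lemma pow3_ge1: "(1::nat) \<le> 3^d" by simp

lemma pt: "TDl (3^(Suc d)) xs ys \<Longrightarrow> xs \<noteq> [] \<Longrightarrow> \<exists>y'. TDl (3^d) (xs@[y]) (ys@[y'])"
  by (rule point_lemma) auto

lemma tsp: "ts (3^d) x = ts (3^d) y \<Longrightarrow> (0 < x \<longleftrightarrow> 0 < y)"
  using ts_pos[OF pow3_ge1] by blast

lemma tsn: "ts (3^d) x = ts (3^d) y \<Longrightarrow> (0 \<le> x \<longleftrightarrow> 0 \<le> y)"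
  using ts_nonneg[OF pow3_ge1] by blast

definition Zst :: "nat \<Rightarrow> nat \<Rightarrow> nat list \<Rightarrow> nat list \<Rightarrow> bool" where
  "Zst n d r s \<longleftrightarrow> 3^d \<le> n+1 \<and> (\<exists>a e a' e'. a < e \<and> a' < e' \<and> r = C n a e \<and> s = C n a' e' \<and>
      TDl (3^d) [cc n, a, e] [cc n, a', e'])"

lemma Zst_sym: "Zst n d r s \<Longrightarrow> Zst n d s r"
  unfolding Zst_def using TDl_sym by blast

lemma Zst_prop: "Zst n d r s \<Longrightarrow>
   (\<forall>x\<in>set r. q \<in> lab (Mk n s1) x) = (\<forall>x\<in>set s. q \<in> lab (Mk n s2) x)"
proof -
  assume "Zst n d r s"
  then obtain a e a' e' where H: "a < e" "a' < e'" "r = C n a e" "s = C n a' e'"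
    "TDl (3^d) [cc n, a, e] [cc n, a', e']" unfolding Zst_def by blast
  hence "ts (3^d) (a - cc n) = ts (3^d) (a' - cc n)" by (simp add: TDl3_iff)
  hence "cc n \<le> a \<longleftrightarrow> cc n \<le> a'" using tsn by fastforce
  thus ?thesis using H Prop_C[of a e n q s1] Prop_C[of a' e' n q s2] by simp
qed

lemma ts_hi: "int M \<le> x \<Longrightarrow> ts M x = int M"
  by (simp add: ts_def)

lemma ts_lo: "x \<le> - int M \<Longrightarrow> ts M x = - int M"
  by (simp add: ts_def)

lemma ts_shift: "ts M x = ts M y \<Longrightarrow> 0 \<le> k \<Longrightarrow> 0 \<le> x \<Longrightarrow> 0 \<le> y \<Longrightarrow> ts M (k + x) = ts M (k + y)"
  unfolding ts_def by (auto simp: max_def min_def split: if_splits)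

lemma st_rep:
  assumes M: "M \<le> n+1" "1 \<le> M" and T: "TDl M [cc n, a, e] [cc n, a', e']"
    and ae: "a < e" "a' < e'" and eq: "C n a e = C n a3 (a3 + (e - a))"
  shows "\<exists>a2. C n a' e' = C n a2 (a2 + (e' - a')) \<and> TDl M [cc n, a3, a3 + (e - a)] [cc n, a2, a2 + (e' - a')]"
proof -
  from C_rep[OF ae(1) eq] consider "a = a3" | "e \<le> 1 \<and> a3 + (e - a) \<le> 1" | "cc n \<le> a \<and> cc n \<le> a3" by blast
  thus ?thesis
  proof cases
    case 1 thus ?thesis using T by (intro exI[of _ a']) simp
  next
    case 2
    have "a3 - cc n \<le> - int M" "a - cc n \<le> - int M" "a3 + (e - a) - cc n \<le> - int M" "e - cc n \<le> - int M"
      using 2 M ae by (auto simp: cc_def)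
    hence "TDl M [cc n, a3, a3 + (e - a)] [cc n, a, e]"
      unfolding TDl3_iff by (simp add: ts_lo)
    thus ?thesis using T TDl_trans by (intro exI[of _ a']) auto
  next
    case 3
    have t1: "ts M (a - cc n) = ts M (a' - cc n)" and t2: "ts M (e - a) = ts M (e' - a')"
      using T by (simp_all add: TDl3_iff)
    have "cc n \<le> a'" using 3 ts_nonneg[OF M(2) t1] by simp
    hence "C n a' e' = C n a3 (a3 + (e' - a'))" using C_allq[of n a' a3 "e' - a'"] 3 by simp
    moreover have "ts M (a3 - cc n + (e - a)) = ts M (a3 - cc n + (e' - a'))"
      using ts_shift[OF t2, of "a3 - cc n"] 3 ae by simp
    hence "TDl M [cc n, a3, a3 + (e - a)] [cc n, a3, a3 + (e' - a')]"
      unfolding TDl3_iff using t2 by (simp add: algebra_simps)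
    ultimately show ?thesis by blast
  qed
qed

lemma pow3_le: "3^Suc d \<le> n + 1 \<Longrightarrow> (3::nat)^d \<le> n + 1"
proof -
  have "(3::nat)^d \<le> 3^Suc d" by simp
  thus "3^Suc d \<le> n + 1 \<Longrightarrow> (3::nat)^d \<le> n + 1" by linarith
qed

lemma st_pref: "Zst n (Suc d) r s \<Longrightarrow> r' \<in> Pref r \<Longrightarrow> \<exists>s'\<in>Pref s. Zst n d r' s'"
proof -
  assume Z: "Zst n (Suc d) r s" and r': "r' \<in> Pref r"
  then obtain a e a' e' where H: "a < e" "a' < e'" "r = C n a e" "s = C n a' e'"
    "TDl (3^Suc d) [cc n, a, e] [cc n, a', e']" and N: "3^Suc d \<le> n+1" unfolding Zst_def by blast
  obtain y where y: "a < y" "y < e" "r' = C n a y" using r' H Pref_C by blast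
  obtain y' where T: "TDl (3^d) [cc n, a, e, y] [cc n, a', e', y']" using pt[OF H(5)] by fastforce
  hence t1: "ts (3^d) (y - a) = ts (3^d) (y' - a')" and t2: "ts (3^d) (y - e) = ts (3^d) (y' - e')"
    by (simp_all add: TDl4_iff)
  have y': "a' < y'" "y' < e'" using y tsp[OF t1] tsp[OF ts_flip[OF t2]] by simp_all
  have "TDl (3^d) [cc n, a, y] [cc n, a', y']" using TDl_sub[OF T, of "[0,1,3]"] by simp
  hence "Zst n d r' (C n a' y')" unfolding Zst_def using y y' pow3_le[OF N] by blast
  moreover have "C n a' y' \<in> Pref s" using H y' Pref_C by blast
  ultimately show ?thesis by blast
qed

lemma st_suff: "Zst n (Suc d) r s \<Longrightarrow> r' \<in> Suff r \<Longrightarrow> \<exists>s'\<in>Suff s. Zst n d r' s'"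
proof -
  assume Z: "Zst n (Suc d) r s" and r': "r' \<in> Suff r"
  then obtain a e a' e' where H: "a < e" "a' < e'" "r = C n a e" "s = C n a' e'"
    "TDl (3^Suc d) [cc n, a, e] [cc n, a', e']" and N: "3^Suc d \<le> n+1" unfolding Zst_def by blast
  obtain y where y: "a < y" "y < e" "r' = C n y e" using r' H Suff_C by blast
  obtain y' where T: "TDl (3^d) [cc n, a, e, y] [cc n, a', e', y']" using pt[OF H(5)] by fastforce
  hence t1: "ts (3^d) (y - a) = ts (3^d) (y' - a')" and t2: "ts (3^d) (y - e) = ts (3^d) (y' - e')"
    by (simp_all add: TDl4_iff)
  have y': "a' < y'" "y' < e'" using y tsp[OF t1] tsp[OF ts_flip[OF t2]] by simp_all
  have "TDl (3^d) [cc n, y, e] [cc n, y', e']" using TDl_sub[OF T, of "[0,3,2]"] by simp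
  hence "Zst n d r' (C n y' e')" unfolding Zst_def using y y' pow3_le[OF N] by blast
  moreover have "C n y' e' \<in> Suff s" using H y' Suff_C by blast
  ultimately show ?thesis by blast
qed

lemma st_bbar: "Zst n (Suc d) r s \<Longrightarrow> istr n r' \<Longrightarrow> r \<in> Pref r' \<Longrightarrow>
   \<exists>s'. istr n s' \<and> s \<in> Pref s' \<and> Zst n d r' s'"
proof -
  assume Z: "Zst n (Suc d) r s" and tr: "istr n r'" and r': "r \<in> Pref r'"
  then obtain a e a' e' where H: "a < e" "a' < e'" "r = C n a e" "s = C n a' e'"
    "TDl (3^Suc d) [cc n, a, e] [cc n, a', e']" and N: "3^Suc d \<le> n+1" unfolding Zst_def by blast
  obtain a3 e3 where R: "r' = C n a3 e3" "C n a e = C n a3 (a3 + (e - a))" "a3 + (e - a) < e3"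
    using Bbar_C[OF tr _ H(1)] r' H(3) by blast
  obtain a2 where A2: "C n a' e' = C n a2 (a2 + (e' - a'))"
    "TDl (3^Suc d) [cc n, a3, a3 + (e - a)] [cc n, a2, a2 + (e' - a')]"
    using st_rep[OF N _ H(5) H(1,2) R(2)] by auto
  obtain y' where T: "TDl (3^d) [cc n, a3, a3 + (e - a), e3] [cc n, a2, a2 + (e' - a'), y']"
    using pt[OF A2(2)] by fastforce
  hence t1: "ts (3^d) (e3 - (a3 + (e - a))) = ts (3^d) (y' - (a2 + (e' - a')))"
    by (simp add: TDl4_iff)
  have y': "a2 + (e' - a') < y'" using R(3) tsp[OF t1] by simp
  have "TDl (3^d) [cc n, a3, e3] [cc n, a2, y']" using TDl_sub[OF T, of "[0,1,3]"] by simp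
  moreover have "a3 < e3" "a2 < y'" using R(3) y' H(1,2) by simp_all
  ultimately have "Zst n d r' (C n a2 y')" unfolding Zst_def using R(1) pow3_le[OF N] by blast
  moreover have "s \<in> Pref (C n a2 y')" unfolding Pref_C using H A2 y'
    by (intro exI[of _ "a2 + (e' - a')"]) simp
  moreover have "istr n (C n a2 y')" using y' H by (intro trace_C) simp
  ultimately show ?thesis by blast
qed

lemma st_ebar: "Zst n (Suc d) r s \<Longrightarrow> istr n r' \<Longrightarrow> r \<in> Suff r' \<Longrightarrow>
   \<exists>s'. istr n s' \<and> s \<in> Suff s' \<and> Zst n d r' s'"
proof -
  assume Z: "Zst n (Suc d) r s" and tr: "istr n r'" and r': "r \<in> Suff r'"
  then obtain a e a' e' where H: "a < e" "a' < e'" "r = C n a e" "s = C n a' e'"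
    "TDl (3^Suc d) [cc n, a, e] [cc n, a', e']" and N: "3^Suc d \<le> n+1" unfolding Zst_def by blast
  obtain a3 e3 where R: "r' = C n a3 e3" "C n a e = C n (e3 - (e - a)) e3" "a3 < e3 - (e - a)"
    using Ebar_C[OF tr _ H(1)] r' H(3) by blast
  have R2: "C n a e = C n (e3 - (e - a)) (e3 - (e - a) + (e - a))" using R(2) by simp
  obtain a2 where A2: "C n a' e' = C n a2 (a2 + (e' - a'))"
    "TDl (3^Suc d) [cc n, e3 - (e - a), e3 - (e - a) + (e - a)] [cc n, a2, a2 + (e' - a')]"
    using st_rep[OF N _ H(5) H(1,2) R2] by auto
  obtain y' where T: "TDl (3^d) [cc n, e3 - (e - a), e3 - (e - a) + (e - a), a3] [cc n, a2, a2 + (e' - a'), y']"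
    using pt[OF A2(2)] by fastforce
  hence t1: "ts (3^d) (a3 - (e3 - (e - a))) = ts (3^d) (y' - a2)"
    by (simp add: TDl4_iff)
  have y': "y' < a2" using R(3) tsp[OF ts_flip[OF t1]] by simp
  have "TDl (3^d) [cc n, a3, e3] [cc n, y', a2 + (e' - a')]" using TDl_sub[OF T, of "[0,3,2]"] by simp
  moreover have "a3 < e3" "y' < a2 + (e' - a')" using R(3) y' H(1,2) by simp_all
  ultimately have "Zst n d r' (C n y' (a2 + (e' - a')))" unfolding Zst_def using R(1) pow3_le[OF N] by blast
  moreover have "s \<in> Suff (C n y' (a2 + (e' - a')))" unfolding Suff_C using H A2 y'
    by (intro exI[of _ a2]) simp
  moreover have "istr n (C n y' (a2 + (e' - a')))" using y' H by (intro trace_C) simp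
  ultimately show ?thesis by blast
qed

lemma ct_simps[simp]:
  "states (comp_tree K) = {\<rho>. initial_trace K \<rho>}"
  "trans (comp_tree K) = {(\<rho>, \<rho> @ [s]) | \<rho> s. initial_trace K \<rho> \<and> initial_trace K (\<rho> @ [s])}"
  "lab (comp_tree K) = (\<lambda>\<rho>. lab K (last \<rho>))"
  "init (comp_tree K) = [init K]"
  by (simp_all add: comp_tree_def)

definition win :: "'s list \<Rightarrow> nat \<Rightarrow> 's list list" where
  "win \<rho> i = map (\<lambda>j. take (Suc j) \<rho>) [i..<length \<rho>]"

lemma length_win[simp]: "length (win \<rho> i) = length \<rho> - i"
  by (simp add: win_def)

lemma nth_win[simp]: "k < length \<rho> - i \<Longrightarrow> win \<rho> i ! k = take (Suc (i + k)) \<rho>"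
  by (simp add: win_def)

lemma win_Cons: "i < length \<rho> \<Longrightarrow> win \<rho> i = take (Suc i) \<rho> # win \<rho> (Suc i)"
  by (simp add: win_def upt_conv_Cons)

lemma take_win: "i + k \<le> length \<rho> \<Longrightarrow> take k (win \<rho> i) = win (take (i + k) \<rho>) i"
  by (rule nth_equalityI) (auto simp: min_def split: if_splits)

lemma drop_win: "drop k (win \<rho> i) = win \<rho> (i + k)"
  by (rule nth_equalityI) (auto simp: algebra_simps)

lemma last_win: "i < length \<rho> \<Longrightarrow> last (win \<rho> i) = \<rho>"
proof -
  assume i: "i < length \<rho>"
  have ne: "win \<rho> i \<noteq> []" using i by (simp add: win_Cons)
  have e: "Suc (i + (length \<rho> - i - 1)) = length \<rho>" using i by simp
  have "last (win \<rho> i) = win \<rho> i ! (length (win \<rho> i) - 1)" by (rule last_conv_nth[OF ne])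
  also have "\<dots> = take (Suc (i + (length \<rho> - i - 1))) \<rho>" using i by simp
  also have "\<dots> = \<rho>" by (simp only: e take_all_iff order_refl)
  finally show ?thesis .
qed

lemma hd_win: "i < length \<rho> \<Longrightarrow> hd (win \<rho> i) = take (Suc i) \<rho>"
  by (simp add: win_Cons)

lemma win_inj: "i < length \<rho> \<Longrightarrow> i2 < length \<rho>2 \<Longrightarrow> win \<rho> i = win \<rho>2 i2 \<Longrightarrow> \<rho> = \<rho>2 \<and> i = i2"
proof -
  assume a: "i < length \<rho>" "i2 < length \<rho>2" "win \<rho> i = win \<rho>2 i2"
  have "\<rho> = \<rho>2" using a last_win[of i \<rho>] last_win[of i2 \<rho>2] by simp
  moreover have "take (Suc i) \<rho> = take (Suc i2) \<rho>2" using a hd_win[of i \<rho>] hd_win[of i2 \<rho>2] by simp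
  hence "length (take (Suc i) \<rho>) = length (take (Suc i2) \<rho>2)" by simp
  hence "i = i2" using a by simp
  ultimately show ?thesis by simp
qed

lemma init_take: "initial_trace K \<rho> \<Longrightarrow> 1 \<le> k \<Longrightarrow> initial_trace K (take k \<rho>)"
  unfolding initial_trace_def is_trace_def
  by (auto simp: hd_take dest: in_set_takeD)

lemma ct_trace_char: "is_trace (comp_tree K) \<tau> \<Longrightarrow> \<exists>\<rho> i. initial_trace K \<rho> \<and> i < length \<rho> \<and> \<tau> = win \<rho> i"
proof (induction \<tau>)
  case Nil thus ?case by (simp add: is_trace_def)
next
  case (Cons x \<tau>)
  have TT: "\<And>i. Suc i < length (x#\<tau>) \<Longrightarrow> ((x#\<tau>) ! i, (x#\<tau>) ! Suc i) \<in> trans (comp_tree K)"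
    using Cons.prems unfolding is_trace_def by blast
  have xi: "initial_trace K x" using Cons.prems unfolding is_trace_def by auto
  show ?case
  proof (cases "\<tau> = []")
    case True
    have "x \<noteq> []" using xi by (simp add: initial_trace_def is_trace_def)
    hence "win x (length x - 1) = [x]" by (simp add: win_def upt_conv_Cons)
    thus ?thesis using True xi \<open>x \<noteq> []\<close> by (intro exI[of _ x] exI[of _ "length x - 1"]) simp
  next
    case False
    have tr: "is_trace (comp_tree K) \<tau>" unfolding is_trace_def
    proof (intro conjI allI impI)
      show "\<tau> \<noteq> []" by fact
      show "set \<tau> \<subseteq> states (comp_tree K)" using Cons.prems unfolding is_trace_def by auto
      fix i assume "Suc i < length \<tau>"
      hence "Suc (Suc i) < length (x#\<tau>)" by simp
      hence "((x#\<tau>) ! Suc i, (x#\<tau>) ! Suc (Suc i)) \<in> trans (comp_tree K)" by (rule TT)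
      thus "(\<tau> ! i, \<tau> ! Suc i) \<in> trans (comp_tree K)" by simp
    qed
    then obtain \<rho> i where R: "initial_trace K \<rho>" "i < length \<rho>" "\<tau> = win \<rho> i" using Cons.IH by blast
    have "Suc 0 < length (x#\<tau>)" using False by simp
    hence "((x#\<tau>) ! 0, (x#\<tau>) ! Suc 0) \<in> trans (comp_tree K)" by (rule TT)
    hence "(x, \<tau> ! 0) \<in> trans (comp_tree K)" by simp
    then obtain s where xs: "\<tau> ! 0 = x @ [s]" by auto
    have "\<tau> ! 0 = take (Suc i) \<rho>" using R by simp
    hence tk: "take (Suc i) \<rho> = x @ [s]" using xs by simp
    have "length (take (Suc i) \<rho>) = Suc i" using R(2) by simp
    hence li: "length x = i" using tk by simp
    have "x \<noteq> []" using xi by (simp add: initial_trace_def is_trace_def)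
    hence i0: "i \<ge> 1" using li by (cases x) auto
    have "take i \<rho> = take i (take (Suc i) \<rho>)" by simp
    also have "\<dots> = x" using tk li by simp
    finally have "take i \<rho> = x" .
    hence "win \<rho> (i - 1) = x # \<tau>" using R i0 by (subst win_Cons) auto
    thus ?thesis using R i0 by (intro exI[of _ \<rho>] exI[of _ "i - 1"]) auto
  qed
qed

lemma ct_trace_win: "initial_trace K \<rho> \<Longrightarrow> i < length \<rho> \<Longrightarrow> is_trace (comp_tree K) (win \<rho> i)"
  unfolding is_trace_def
proof (intro conjI allI impI)
  assume R: "initial_trace K \<rho>" "i < length \<rho>"
  thus "win \<rho> i \<noteq> []" by (simp add: win_Cons)
  show "set (win \<rho> i) \<subseteq> states (comp_tree K)" using R by (auto simp: win_def intro: init_take)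
  fix k assume k: "Suc k < length (win \<rho> i)"
  have "take (Suc (Suc (i + k))) \<rho> = take (Suc (i + k)) \<rho> @ [\<rho> ! Suc (i + k)]"
    using k by (simp add: take_Suc_conv_app_nth)
  moreover have "initial_trace K (take (Suc (i + k)) \<rho>)"
    using init_take[OF R(1), of "Suc (i+k)"] by simp
  moreover have "initial_trace K (take (Suc (Suc (i + k))) \<rho>)"
    using init_take[OF R(1), of "Suc (Suc (i+k))"] by simp
  ultimately show "(win \<rho> i ! k, win \<rho> i ! Suc k) \<in> trans (comp_tree K)" using k by auto
qed

definition W :: "nat \<Rightarrow> int \<Rightarrow> int \<Rightarrow> int \<Rightarrow> nat list list" where
  "W n a s e = win (C n a e) (nat (s - a))"

lemma init_Mk: "initial_trace (Mk n s0) \<rho> \<longleftrightarrow> istr n \<rho> \<and> hd \<rho> = s0"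
  by (simp add: initial_trace_def is_trace_Mk)

lemma init_char: "initial_trace (Mk n s0) \<rho> \<Longrightarrow> \<exists>a e. a < e \<and> \<rho> = C n a e \<and> clip n a = s0"
  using trace_char hd_C unfolding init_Mk by metis

lemma init_C: "a < e \<Longrightarrow> clip n a = s0 \<Longrightarrow> initial_trace (Mk n s0) (C n a e)"
  unfolding init_Mk using trace_C hd_C by metis

lemma W_trace: "clip n a = s0 \<Longrightarrow> a \<le> s \<Longrightarrow> s < e \<Longrightarrow> is_trace (comp_tree (Mk n s0)) (W n a s e)"
  unfolding W_def by (rule ct_trace_win) (auto intro: init_C)

lemma Pref_W:
  assumes as: "a \<le> s" "s < e"
  shows "\<tau> \<in> Pref (W n a s e) \<longleftrightarrow> (\<exists>y. s < y \<and> y < e \<and> \<tau> = W n a s y)"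
proof
  assume "\<tau> \<in> Pref (W n a s e)"
  then obtain k where k: "1 \<le> k" "k < length (W n a s e)" "\<tau> = take k (W n a s e)" by (auto simp: Pref_def)
  have kk: "nat (s - a) + k \<le> nat (e - a)" using k by (simp add: W_def)
  have "\<tau> = win (take (nat (s - a) + k) (C n a e)) (nat (s - a))"
    using k kk by (simp add: W_def take_win)
  also have "nat (s - a) + k = nat (s + int k - a)" using as by simp
  also have "take (nat (s + int k - a)) (C n a e) = C n a (s + int k)"
    using take_C[of a "s + int k" e n] as kk by simp
  finally have "\<tau> = W n a s (s + int k)" by (simp add: W_def)
  thus "\<exists>y. s < y \<and> y < e \<and> \<tau> = W n a s y" using k kk as
    by (intro exI[of _ "s + int k"]) (auto simp: W_def)
next
  assume "\<exists>y. s < y \<and> y < e \<and> \<tau> = W n a s y"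
  then obtain y where y: "s < y" "y < e" "\<tau> = W n a s y" by blast
  have "take (nat (y - s)) (W n a s e) = win (take (nat (s - a) + nat (y - s)) (C n a e)) (nat (s - a))"
    using as y by (simp add: W_def take_win)
  also have "take (nat (s - a) + nat (y - s)) (C n a e) = C n a y"
    using take_C[of a y e n] as y by (simp add: nat_add_distrib[symmetric])
  finally have "\<tau> = take (nat (y - s)) (W n a s e)" using y by (simp add: W_def)
  thus "\<tau> \<in> Pref (W n a s e)" unfolding Pref_def using as y
    by (intro CollectI exI[of _ "nat (y - s)"]) (auto simp: W_def)
qed

lemma Suff_W:
  assumes as: "a \<le> s" "s < e"
  shows "\<tau> \<in> Suff (W n a s e) \<longleftrightarrow> (\<exists>y. s < y \<and> y < e \<and> \<tau> = W n a y e)"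
proof
  assume "\<tau> \<in> Suff (W n a s e)"
  then obtain k where k: "1 \<le> k" "k < length (W n a s e)" "\<tau> = drop k (W n a s e)" by (auto simp: Suff_def)
  have kk: "nat (s - a) + k < nat (e - a)" using k by (simp add: W_def)
  have "\<tau> = win (C n a e) (nat (s - a) + k)" using k by (simp add: W_def drop_win)
  also have "nat (s - a) + k = nat (s + int k - a)" using as by simp
  finally have "\<tau> = W n a (s + int k) e" by (simp add: W_def)
  thus "\<exists>y. s < y \<and> y < e \<and> \<tau> = W n a y e" using k kk as
    by (intro exI[of _ "s + int k"]) auto
next
  assume "\<exists>y. s < y \<and> y < e \<and> \<tau> = W n a y e"
  then obtain y where y: "s < y" "y < e" "\<tau> = W n a y e" by blast
  have "drop (nat (y - s)) (W n a s e) = win (C n a e) (nat (s - a) + nat (y - s))"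
    by (simp add: W_def drop_win)
  also have "nat (s - a) + nat (y - s) = nat (y - a)" using as y by simp
  finally have "\<tau> = drop (nat (y - s)) (W n a s e)" using y by (simp add: W_def)
  thus "\<tau> \<in> Suff (W n a s e)" unfolding Suff_def using as y
    by (intro CollectI exI[of _ "nat (y - s)"]) (auto simp: W_def)
qed

lemma Bbar_W:
  assumes tr: "is_trace (comp_tree (Mk n s0 :: (nat,'ap) kripke)) \<tau>" and P: "W n a s e \<in> Pref \<tau>" and as: "a \<le> s" "s < e"
  shows "\<exists>a3 e3. \<tau> = W n a3 (a3 + (s - a)) e3 \<and> clip n a3 = s0 \<and> C n a e = C n a3 (a3 + (e - a)) \<and> a3 + (e - a) < e3"
proof -
  obtain \<rho> i where R: "initial_trace (Mk n s0 :: (nat,'ap) kripke) \<rho>" "i < length \<rho>" "\<tau> = win \<rho> i"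
    using ct_trace_char[OF tr] by blast
  obtain a3 e3 where A: "a3 < e3" "\<rho> = C n a3 e3" "clip n a3 = s0" using init_char[OF R(1)] by blast
  obtain k where k: "1 \<le> k" "k < length \<tau>" "W n a s e = take k \<tau>" using P by (auto simp: Pref_def)
  have ik: "i + k < length \<rho>" using k R by simp
  have "W n a s e = win (take (i + k) \<rho>) i" using k R ik by (simp add: take_win)
  hence "win (C n a e) (nat (s - a)) = win (take (i + k) \<rho>) i" by (simp add: W_def)
  from win_inj[OF _ _ this] have E: "C n a e = take (i + k) \<rho>" "nat (s - a) = i"
    using as k ik R by auto
  have "nat (a3 + int (i+k) - a3) = i + k" by simp
  hence tk: "take (i + k) \<rho> = C n a3 (a3 + int (i + k))" using take_C[of a3 "a3 + int (i+k)" e3 n] A ik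
    by (simp del: of_nat_add)
  have "nat (e - a) = i + k" using arg_cong[OF E(1), of length] ik by simp
  hence ek: "a3 + int (i + k) = a3 + (e - a)" using as by simp
  have "\<tau> = W n a3 (a3 + (s - a)) e3" using R A E as by (simp add: W_def)
  moreover have "a3 + (e - a) < e3" using ik A ek by simp
  ultimately show ?thesis using A E tk ek by metis
qed

lemma Ebar_W:
  assumes tr: "is_trace (comp_tree (Mk n s0 :: (nat,'ap) kripke)) \<tau>" and P: "W n a s e \<in> Suff \<tau>" and as: "a \<le> s" "s < e"
  shows "\<exists>s3. a \<le> s3 \<and> s3 < s \<and> \<tau> = W n a s3 e"
proof -
  obtain \<rho> i where R: "initial_trace (Mk n s0 :: (nat,'ap) kripke) \<rho>" "i < length \<rho>" "\<tau> = win \<rho> i"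
    using ct_trace_char[OF tr] by blast
  obtain k where k: "1 \<le> k" "k < length \<tau>" "W n a s e = drop k \<tau>" using P by (auto simp: Suff_def)
  have "win (C n a e) (nat (s - a)) = win \<rho> (i + k)" using k R by (simp add: W_def drop_win)
  from win_inj[OF _ _ this] have E: "C n a e = \<rho>" "nat (s - a) = i + k"
    using as k R by auto
  have "\<tau> = W n a (a + int i) e" using R E by (simp add: W_def)
  thus ?thesis using E k as by (intro exI[of _ "a + int i"]) auto
qed

lemma Prop_W:
  assumes as: "a \<le> s" "s < e"
  shows "(\<forall>x\<in>set (W n a s e). q \<in> lab (comp_tree (Mk n s0 :: (nat,'ap) kripke)) x) \<longleftrightarrow> cc n \<le> s"
proof -
  have L: "\<And>j. j < nat (e - a) \<Longrightarrow> last (take (Suc j) (C n a e)) = clip n (a + int j)"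
    by (simp add: last_conv_nth take_Suc_conv_app_nth)
  have S: "set (W n a s e) = {take (Suc j) (C n a e) | j. nat (s - a) \<le> j \<and> j < nat (e - a)}"
    by (auto simp: W_def win_def)
  show ?thesis
  proof
    assume H: "\<forall>x\<in>set (W n a s e). q \<in> lab (comp_tree (Mk n s0 :: (nat,'ap) kripke)) x"
    have "take (Suc (nat (s - a))) (C n a e) \<in> set (W n a s e)" unfolding S using as by auto
    hence "q \<in> lab (comp_tree (Mk n s0 :: (nat,'ap) kripke)) (take (Suc (nat (s - a))) (C n a e))" using H by blast
    hence "q \<in> lab (Mk n s0 :: (nat,'ap) kripke) (clip n (a + int (nat (s - a))))" using L[of "nat (s - a)"] as by simp
    hence "clip n s = n + 2" using as by (auto split: if_splits)
    thus "cc n \<le> s" by (simp add: clip_def cc_def)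
  next
    assume cs: "cc n \<le> s"
    show "\<forall>x\<in>set (W n a s e). q \<in> lab (comp_tree (Mk n s0 :: (nat,'ap) kripke)) x"
    proof
      fix x assume "x \<in> set (W n a s e)"
      then obtain j where j: "nat (s - a) \<le> j" "j < nat (e - a)" "x = take (Suc j) (C n a e)" unfolding S by blast
      have "cc n \<le> a + int j" using j cs as by simp
      thus "q \<in> lab (comp_tree (Mk n s0 :: (nat,'ap) kripke)) x" using L j clip_top by simp
    qed
  qed
qed

definition Zct :: "nat \<Rightarrow> nat \<Rightarrow> nat \<Rightarrow> nat \<Rightarrow> nat list list \<Rightarrow> nat list list \<Rightarrow> bool" where
  "Zct n s1 s2 d t t' \<longleftrightarrow> 3^d \<le> n+1 \<and> (\<exists>a s e a' s' e'. clip n a = s1 \<and> clip n a' = s2 \<and>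
     a \<le> s \<and> s < e \<and> a' \<le> s' \<and> s' < e' \<and> t = W n a s e \<and> t' = W n a' s' e' \<and>
     TDl (3^d) [cc n, a, s, e] [cc n, a', s', e'])"

lemma Zct_sym: "Zct n s1 s2 d t t' \<Longrightarrow> Zct n s2 s1 d t' t"
  unfolding Zct_def using TDl_sym by blast

lemma Zct_prop: "Zct n s1 s2 d t t' \<Longrightarrow>
  (\<forall>x\<in>set t. q \<in> lab (comp_tree (Mk n s1 :: (nat,'ap) kripke)) x) =
  (\<forall>x\<in>set t'. q \<in> lab (comp_tree (Mk n s2 :: (nat,'ap) kripke)) x)"
proof -
  assume "Zct n s1 s2 d t t'"
  then obtain a s e a' s' e' where H: "a \<le> s" "s < e" "a' \<le> s'" "s' < e'" "t = W n a s e" "t' = W n a' s' e'"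
    "TDl (3^d) [cc n, a, s, e] [cc n, a', s', e']" unfolding Zct_def by blast
  hence "ts (3^d) (s - cc n) = ts (3^d) (s' - cc n)" by (simp add: TDl4_iff)
  hence "cc n \<le> s \<longleftrightarrow> cc n \<le> s'" using tsn by fastforce
  thus ?thesis using H Prop_W[of a s e n q s1] Prop_W[of a' s' e' n q s2] by simp
qed

lemma ct_pref: "Zct n s1 s2 (Suc d) t t' \<Longrightarrow> r \<in> Pref t \<Longrightarrow> \<exists>r'\<in>Pref t'. Zct n s1 s2 d r r'"
proof -
  assume Z: "Zct n s1 s2 (Suc d) t t'" and r: "r \<in> Pref t"
  then obtain a s e a' s' e' where H: "clip n a = s1" "clip n a' = s2" "a \<le> s" "s < e" "a' \<le> s'" "s' < e'"
    "t = W n a s e" "t' = W n a' s' e'" "TDl (3^Suc d) [cc n, a, s, e] [cc n, a', s', e']"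
    and N: "3^Suc d \<le> n+1" unfolding Zct_def by blast
  obtain y where y: "s < y" "y < e" "r = W n a s y" using r H(7) Pref_W[OF H(3,4)] by blast
  obtain y' where T: "TDl (3^d) [cc n, a, s, e, y] [cc n, a', s', e', y']" using pt[OF H(9)] by fastforce
  have t1: "ts (3^d) (y - s) = ts (3^d) (y' - s')" using TDl_nth[OF T, of 2 4] by simp
  have t2: "ts (3^d) (y - e) = ts (3^d) (y' - e')" using TDl_nth[OF T, of 3 4] by simp
  have y': "s' < y'" "y' < e'" using y tsp[OF t1] tsp[OF ts_flip[OF t2]] by simp_all
  have TT: "TDl (3^d) [cc n, a, s, y] [cc n, a', s', y']" using TDl_sub[OF T, of "[0,1,2,4]"] by simp
  have "Zct n s1 s2 d r (W n a' s' y')" unfolding Zct_def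
    using pow3_le[OF N] H(1,2,3,5) y(1,3) y'(1) TT
    by (intro conjI exI[of _ a] exI[of _ s] exI[of _ y] exI[of _ a'] exI[of _ s'] exI[of _ y']) (assumption | rule refl)+
  moreover have "W n a' s' y' \<in> Pref t'" unfolding H(8) Pref_W[OF H(5,6)] using y' by blast
  ultimately show ?thesis by blast
qed

lemma ct_suff: "Zct n s1 s2 (Suc d) t t' \<Longrightarrow> r \<in> Suff t \<Longrightarrow> \<exists>r'\<in>Suff t'. Zct n s1 s2 d r r'"
proof -
  assume Z: "Zct n s1 s2 (Suc d) t t'" and r: "r \<in> Suff t"
  then obtain a s e a' s' e' where H: "clip n a = s1" "clip n a' = s2" "a \<le> s" "s < e" "a' \<le> s'" "s' < e'"
    "t = W n a s e" "t' = W n a' s' e'" "TDl (3^Suc d) [cc n, a, s, e] [cc n, a', s', e']"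
    and N: "3^Suc d \<le> n+1" unfolding Zct_def by blast
  obtain y where y: "s < y" "y < e" "r = W n a y e" using r H(7) Suff_W[OF H(3,4)] by blast
  obtain y' where T: "TDl (3^d) [cc n, a, s, e, y] [cc n, a', s', e', y']" using pt[OF H(9)] by fastforce
  have t1: "ts (3^d) (y - s) = ts (3^d) (y' - s')" using TDl_nth[OF T, of 2 4] by simp
  have t2: "ts (3^d) (y - e) = ts (3^d) (y' - e')" using TDl_nth[OF T, of 3 4] by simp
  have y': "s' < y'" "y' < e'" using y tsp[OF t1] tsp[OF ts_flip[OF t2]] by simp_all
  have TT: "TDl (3^d) [cc n, a, y, e] [cc n, a', y', e']" using TDl_sub[OF T, of "[0,1,4,3]"] by simp
  have ay: "a \<le> y" "a' \<le> y'" using y y' H by simp_all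
  have "Zct n s1 s2 d r (W n a' y' e')" unfolding Zct_def
    using pow3_le[OF N] H(1,2) ay y(2,3) y'(2) TT
    by (intro conjI exI[of _ a] exI[of _ y] exI[of _ e] exI[of _ a'] exI[of _ y'] exI[of _ e']) (assumption | rule refl)+
  moreover have "W n a' y' e' \<in> Suff t'" unfolding H(8) Suff_W[OF H(5,6)] using y' by blast
  ultimately show ?thesis by blast
qed

lemma clip_le1: "clip n a \<le> 1 \<Longrightarrow> a \<le> 1"
  by (simp add: clip_def)

lemma ct_bbar:
  assumes Z: "Zct n s1 s2 (Suc d) t t'" and s1: "s1 \<le> 1"
    and tr: "is_trace (comp_tree (Mk n s1 :: (nat,'ap) kripke)) r" and P: "t \<in> Pref r"
  shows "\<exists>r'. is_trace (comp_tree (Mk n s2 :: (nat,'ap) kripke)) r' \<and> t' \<in> Pref r' \<and> Zct n s1 s2 d r r'"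
proof -
  obtain a s e a' s' e' where H: "clip n a = s1" "clip n a' = s2" "a \<le> s" "s < e" "a' \<le> s'" "s' < e'"
    "t = W n a s e" "t' = W n a' s' e'" "TDl (3^Suc d) [cc n, a, s, e] [cc n, a', s', e']"
    and N: "3^Suc d \<le> n+1" using Z unfolding Zct_def by blast
  obtain a3 e3 where R: "r = W n a3 (a3 + (s - a)) e3" "clip n a3 = s1" "C n a e = C n a3 (a3 + (e - a))"
    "a3 + (e - a) < e3" using Bbar_W[OF tr _ H(3,4)] P H(7) by blast
  have a1: "a \<le> 1" using H(1) s1 clip_le1[of n a] by simp
  have T3: "TDl (3^Suc d) [cc n, a3, a3 + (s - a), a3 + (e - a)] [cc n, a', s', e']"
  proof -
    from C_rep[OF _ R(3)] H(3,4) consider "a = a3" | "e \<le> 1 \<and> a3 + (e - a) \<le> 1" | "cc n \<le> a \<and> cc n \<le> a3"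
      by force
    thus ?thesis
    proof cases
      case 1 thus ?thesis using H(9) by simp
    next
      case 2
      have "a3 - cc n \<le> - int (3^Suc d)" "a - cc n \<le> - int (3^Suc d)"
        "a3 + (s - a) - cc n \<le> - int (3^Suc d)" "s - cc n \<le> - int (3^Suc d)"
        "a3 + (e - a) - cc n \<le> - int (3^Suc d)" "e - cc n \<le> - int (3^Suc d)"
      proof -
        have Ni: "int (3^Suc d) \<le> int n + 1" using N by linarith
        show "a3 - cc n \<le> - int (3^Suc d)" "a - cc n \<le> - int (3^Suc d)"
          "a3 + (s - a) - cc n \<le> - int (3^Suc d)" "s - cc n \<le> - int (3^Suc d)"
          "a3 + (e - a) - cc n \<le> - int (3^Suc d)" "e - cc n \<le> - int (3^Suc d)"
          using 2 Ni H(3,4) unfolding cc_def by linarith+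
      qed
      hence "TDl (3^Suc d) [cc n, a3, a3 + (s - a), a3 + (e - a)] [cc n, a, s, e]"
        unfolding TDl4_iff by (simp add: ts_lo)
      thus ?thesis using H(9) TDl_trans by blast
    next
      case 3 thus ?thesis using a1 by (simp add: cc_def)
    qed
  qed
  obtain y' where T: "TDl (3^d) [cc n, a3, a3 + (s - a), a3 + (e - a), e3] [cc n, a', s', e', y']"
    using pt[OF T3] by fastforce
  have t1: "ts (3^d) (e3 - (a3 + (e - a))) = ts (3^d) (y' - e')" using TDl_nth[OF T, of 3 4] by simp
  have y': "e' < y'" using R(4) tsp[OF t1] by simp
  have "TDl (3^d) [cc n, a3, a3 + (s - a), e3] [cc n, a', s', y']" using TDl_sub[OF T, of "[0,1,2,4]"] by simp
  moreover have "a3 \<le> a3 + (s - a)" "a3 + (s - a) < e3" "s' < y'" using H(3,4,6) R(4) y' by simp_all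
  ultimately have "Zct n s1 s2 d r (W n a' s' y')" unfolding Zct_def using R(1,2) H(2,5) pow3_le[OF N]
    by (intro conjI exI[of _ a3] exI[of _ "a3 + (s - a)"] exI[of _ e3] exI[of _ a'] exI[of _ s'] exI[of _ y']) (assumption | rule refl)+
  moreover have "s' < y'" using H y' by simp
  hence "t' \<in> Pref (W n a' s' y')" unfolding Pref_W[OF H(5) \<open>s' < y'\<close>] using H y' by auto
  moreover have "is_trace (comp_tree (Mk n s2 :: (nat,'ap) kripke)) (W n a' s' y')"
    using H y' by (intro W_trace) auto
  ultimately show ?thesis by blast
qed

lemma ct_ebar:
  assumes Z: "Zct n s1 s2 (Suc d) t t'"
    and tr: "is_trace (comp_tree (Mk n s1 :: (nat,'ap) kripke)) r" and P: "t \<in> Suff r"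
  shows "\<exists>r'. is_trace (comp_tree (Mk n s2 :: (nat,'ap) kripke)) r' \<and> t' \<in> Suff r' \<and> Zct n s1 s2 d r r'"
proof -
  obtain a s e a' s' e' where H: "clip n a = s1" "clip n a' = s2" "a \<le> s" "s < e" "a' \<le> s'" "s' < e'"
    "t = W n a s e" "t' = W n a' s' e'" "TDl (3^Suc d) [cc n, a, s, e] [cc n, a', s', e']"
    and N: "3^Suc d \<le> n+1" using Z unfolding Zct_def by blast
  obtain s3 where R: "a \<le> s3" "s3 < s" "r = W n a s3 e" using Ebar_W[OF tr _ H(3,4)] P H(7) by blast
  obtain y' where T: "TDl (3^d) [cc n, a, s, e, s3] [cc n, a', s', e', y']" using pt[OF H(9)] by fastforce
  have t1: "ts (3^d) (s3 - a) = ts (3^d) (y' - a')" using TDl_nth[OF T, of 1 4] by simp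
  have t2: "ts (3^d) (s3 - s) = ts (3^d) (y' - s')" using TDl_nth[OF T, of 2 4] by simp
  have y': "a' \<le> y'" "y' < s'" using R tsn[OF t1] tsp[OF ts_flip[OF t2]] by simp_all
  have TT: "TDl (3^d) [cc n, a, s3, e] [cc n, a', y', e']" using TDl_sub[OF T, of "[0,1,4,3]"] by simp
  have se: "s3 < e" "y' < e'" using R H y' by simp_all
  have "Zct n s1 s2 d r (W n a' y' e')" unfolding Zct_def using R(1,3) H(1,2) se y'(1) pow3_le[OF N] TT
    by (intro conjI exI[of _ a] exI[of _ s3] exI[of _ e] exI[of _ a'] exI[of _ y'] exI[of _ e']) (assumption | rule refl)+
  moreover have "y' < e'" using y' H by simp
  hence "t' \<in> Suff (W n a' y' e')" unfolding Suff_W[OF y'(1) \<open>y' < e'\<close>] using H y' by auto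
  moreover have "is_trace (comp_tree (Mk n s2 :: (nat,'ap) kripke)) (W n a' y' e')"
    using H y' by (intro W_trace) auto
  ultimately show ?thesis by blast
qed

lemma fin_Mk: "s \<le> n + 2 \<Longrightarrow> finite_kripke (Mk n s)"
  unfolding finite_kripke_def kripke_def by (auto simp: MT_def)

lemma F_good: "models_F (Mk n 1 :: (nat,'ap) kripke) p"
  unfolding models_F_def
proof (intro allI impI)
  fix \<pi> assume P: "initial_path (Mk n 1 :: (nat,'ap) kripke) \<pi>"
  have "\<pi> k = min (k+1) (n+2)" for k
  proof (induction k)
    case 0 thus ?case using P by (simp add: initial_path_def)
  next
    case (Suc k)
    have "(\<pi> k, \<pi> (Suc k)) \<in> MT n" using P by (simp add: initial_path_def)
    thus ?case using Suc by (auto simp: MT_def)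
  qed
  hence "\<pi> (n+1) = n + 2" by simp
  thus "\<exists>i. p \<in> lab (Mk n 1 :: (nat,'ap) kripke) (\<pi> i)" by (intro exI[of _ "n+1"]) simp
qed

lemma F_bad: "\<not> models_F (Mk n 0 :: (nat,'ap) kripke) p"
  unfolding models_F_def
  by (auto intro!: exI[of _ "\<lambda>_. 0"] simp: initial_path_def MT_def)

lemma TDl2I: "ts N (x1 - x0) = ts N (y1 - y0) \<Longrightarrow> TDl N [x0, x1] [y0, y1]"
  using ts_flip[of N x1 x0 y1 y0] unfolding TDl_def by (simp add: allS)

lemma clip0: "clip n a = 0 \<Longrightarrow> a \<le> 0"
  by (simp add: clip_def)

lemma st_equiv:
  "Zst n d \<rho> \<sigma> \<Longrightarrow> hdepth \<psi> \<le> d \<Longrightarrow>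
   hs_sat (Mk n 1 :: (nat,'ap) kripke) \<rho> \<psi> = hs_sat (Mk n 0 :: (nat,'ap) kripke) \<sigma> \<psi>"
proof (rule EF[where Z = "Zst n"])
  show "\<And>d r s q. Zst n d r s \<Longrightarrow> hs_sat (Mk n 1 :: (nat,'ap) kripke) r (Prop q) = hs_sat (Mk n 0 :: (nat,'ap) kripke) s (Prop q)"
    using Zst_prop by (simp only: hs_sat.simps)
  show "\<And>d r s r'. Zst n (Suc d) r s \<Longrightarrow> r' \<in> Pref r \<Longrightarrow> \<exists>s'\<in>Pref s. Zst n d r' s'"
    by (rule st_pref)
  show "\<And>d r s s'. Zst n (Suc d) r s \<Longrightarrow> s' \<in> Pref s \<Longrightarrow> \<exists>r'\<in>Pref r. Zst n d r' s'"
    using st_pref Zst_sym by metis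
  show "\<And>d r s r'. Zst n (Suc d) r s \<Longrightarrow> r' \<in> Suff r \<Longrightarrow> \<exists>s'\<in>Suff s. Zst n d r' s'"
    by (rule st_suff)
  show "\<And>d r s s'. Zst n (Suc d) r s \<Longrightarrow> s' \<in> Suff s \<Longrightarrow> \<exists>r'\<in>Suff r. Zst n d r' s'"
    using st_suff Zst_sym by metis
  show "\<And>d r s r'. Zst n (Suc d) r s \<Longrightarrow> is_trace (Mk n 1 :: (nat,'ap) kripke) r' \<Longrightarrow> r \<in> Pref r' \<Longrightarrow>
              \<exists>s'. is_trace (Mk n 0 :: (nat,'ap) kripke) s' \<and> s \<in> Pref s' \<and> Zst n d r' s'"
    unfolding is_trace_Mk by (rule st_bbar)
  show "\<And>d r s s'. Zst n (Suc d) r s \<Longrightarrow> is_trace (Mk n 0 :: (nat,'ap) kripke) s' \<Longrightarrow> s \<in> Pref s' \<Longrightarrow>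
              \<exists>r'. is_trace (Mk n 1 :: (nat,'ap) kripke) r' \<and> r \<in> Pref r' \<and> Zst n d r' s'"
    unfolding is_trace_Mk using st_bbar Zst_sym by metis
  show "\<And>d r s r'. Zst n (Suc d) r s \<Longrightarrow> is_trace (Mk n 1 :: (nat,'ap) kripke) r' \<Longrightarrow> r \<in> Suff r' \<Longrightarrow>
              \<exists>s'. is_trace (Mk n 0 :: (nat,'ap) kripke) s' \<and> s \<in> Suff s' \<and> Zst n d r' s'"
    unfolding is_trace_Mk by (rule st_ebar)
  show "\<And>d r s s'. Zst n (Suc d) r s \<Longrightarrow> is_trace (Mk n 0 :: (nat,'ap) kripke) s' \<Longrightarrow> s \<in> Suff s' \<Longrightarrow>
              \<exists>r'. is_trace (Mk n 1 :: (nat,'ap) kripke) r' \<and> r \<in> Suff r' \<and> Zst n d r' s'"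
    unfolding is_trace_Mk using st_ebar Zst_sym by metis
qed

lemma ct_equiv:
  "Zct n 1 0 d \<rho> \<sigma> \<Longrightarrow> hdepth \<psi> \<le> d \<Longrightarrow>
   hs_sat (comp_tree (Mk n 1 :: (nat,'ap) kripke)) \<rho> \<psi> = hs_sat (comp_tree (Mk n 0 :: (nat,'ap) kripke)) \<sigma> \<psi>"
proof (rule EF[where Z = "Zct n 1 0"])
  show "\<And>d r s q. Zct n 1 0 d r s \<Longrightarrow> hs_sat (comp_tree (Mk n 1 :: (nat,'ap) kripke)) r (Prop q) =
      hs_sat (comp_tree (Mk n 0 :: (nat,'ap) kripke)) s (Prop q)"
    using Zct_prop by (simp only: hs_sat.simps)
  show "\<And>d r s r'. Zct n 1 0 (Suc d) r s \<Longrightarrow> r' \<in> Pref r \<Longrightarrow> \<exists>s'\<in>Pref s. Zct n 1 0 d r' s'"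
    by (rule ct_pref)
  show "\<And>d r s s'. Zct n 1 0 (Suc d) r s \<Longrightarrow> s' \<in> Pref s \<Longrightarrow> \<exists>r'\<in>Pref r. Zct n 1 0 d r' s'"
    using ct_pref Zct_sym by metis
  show "\<And>d r s r'. Zct n 1 0 (Suc d) r s \<Longrightarrow> r' \<in> Suff r \<Longrightarrow> \<exists>s'\<in>Suff s. Zct n 1 0 d r' s'"
    by (rule ct_suff)
  show "\<And>d r s s'. Zct n 1 0 (Suc d) r s \<Longrightarrow> s' \<in> Suff s \<Longrightarrow> \<exists>r'\<in>Suff r. Zct n 1 0 d r' s'"
    using ct_suff Zct_sym by metis
  show "\<And>d r s r'. Zct n 1 0 (Suc d) r s \<Longrightarrow> is_trace (comp_tree (Mk n 1 :: (nat,'ap) kripke)) r' \<Longrightarrow> r \<in> Pref r' \<Longrightarrow>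
       \<exists>s'. is_trace (comp_tree (Mk n 0 :: (nat,'ap) kripke)) s' \<and> s \<in> Pref s' \<and> Zct n 1 0 d r' s'"
    using ct_bbar by (metis order_refl)
  show "\<And>d r s s'. Zct n 1 0 (Suc d) r s \<Longrightarrow> is_trace (comp_tree (Mk n 0 :: (nat,'ap) kripke)) s' \<Longrightarrow> s \<in> Pref s' \<Longrightarrow>
       \<exists>r'. is_trace (comp_tree (Mk n 1 :: (nat,'ap) kripke)) r' \<and> r \<in> Pref r' \<and> Zct n 1 0 d r' s'"
  proof -
    fix d r s s' assume a: "Zct n 1 0 (Suc d) r s" "is_trace (comp_tree (Mk n 0 :: (nat,'ap) kripke)) s'" "s \<in> Pref s'"
    from ct_bbar[OF Zct_sym[OF a(1)] _ a(2,3)] obtain r' where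
      "is_trace (comp_tree (Mk n 1 :: (nat,'ap) kripke)) r'" "r \<in> Pref r'" "Zct n 0 1 d s' r'" by auto
    thus "\<exists>r'. is_trace (comp_tree (Mk n 1 :: (nat,'ap) kripke)) r' \<and> r \<in> Pref r' \<and> Zct n 1 0 d r' s'"
      using Zct_sym by blast
  qed
  show "\<And>d r s r'. Zct n 1 0 (Suc d) r s \<Longrightarrow> is_trace (comp_tree (Mk n 1 :: (nat,'ap) kripke)) r' \<Longrightarrow> r \<in> Suff r' \<Longrightarrow>
       \<exists>s'. is_trace (comp_tree (Mk n 0 :: (nat,'ap) kripke)) s' \<and> s \<in> Suff s' \<and> Zct n 1 0 d r' s'"
    using ct_ebar by metis
  show "\<And>d r s s'. Zct n 1 0 (Suc d) r s \<Longrightarrow> is_trace (comp_tree (Mk n 0 :: (nat,'ap) kripke)) s' \<Longrightarrow> s \<in> Suff s' \<Longrightarrow>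
       \<exists>r'. is_trace (comp_tree (Mk n 1 :: (nat,'ap) kripke)) r' \<and> r \<in> Suff r' \<and> Zct n 1 0 d r' s'"
  proof -
    fix d r s s' assume a: "Zct n 1 0 (Suc d) r s" "is_trace (comp_tree (Mk n 0 :: (nat,'ap) kripke)) s'" "s \<in> Suff s'"
    from ct_ebar[OF Zct_sym[OF a(1)] a(2,3)] obtain r' where
      "is_trace (comp_tree (Mk n 1 :: (nat,'ap) kripke)) r'" "r \<in> Suff r'" "Zct n 0 1 d s' r'" by auto
    thus "\<exists>r'. is_trace (comp_tree (Mk n 1 :: (nat,'ap) kripke)) r' \<and> r \<in> Suff r' \<and> Zct n 1 0 d r' s'"
      using Zct_sym by blast
  qed
qed

lemma st_partner:
  assumes n: "n = 3^Suc D" and I: "initial_trace (Mk n 0 :: (nat,'ap) kripke) \<sigma>"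
  shows "\<exists>\<rho>. initial_trace (Mk n 1 :: (nat,'ap) kripke) \<rho> \<and> Zst n D \<rho> \<sigma>"
proof -
  obtain a' e' where A: "a' < e'" "\<sigma> = C n a' e'" "clip n a' = 0" using init_char[OF I] by blast
  have a0: "a' \<le> 0" using clip0[OF A(3)] .
  have Ni: "int (3^Suc D) = int n" using n by simp
  have "a' - cc n \<le> - int (3^Suc D)" "1 - cc n \<le> - int (3^Suc D)" using a0 Ni by (simp_all add: cc_def)
  hence "TDl (3^Suc D) [cc n, a'] [cc n, 1]" by (intro TDl2I) (simp add: ts_lo)
  from pt[OF this, of e'] obtain y where T: "TDl (3^D) [cc n, a', e'] [cc n, 1, y]" by auto
  have t1: "ts (3^D) (e' - a') = ts (3^D) (y - 1)" using TDl_nth[OF T, of 1 2] by simp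
  have y: "1 < y" using A(1) tsp[OF t1] by simp
  have "initial_trace (Mk n 1 :: (nat,'ap) kripke) (C n 1 y)" using y by (intro init_C) (auto simp: clip_def)
  moreover have "3^D \<le> n + 1" using n by simp
  moreover have "Zst n D (C n 1 y) \<sigma>" unfolding Zst_def using TDl_sym[OF T] A(1,2) y \<open>3^D \<le> n + 1\<close>
    by (intro conjI exI[of _ 1] exI[of _ y] exI[of _ a'] exI[of _ e']) (assumption | rule refl)+
  ultimately show ?thesis by blast
qed

lemma ct_partner:
  assumes n: "n = 3^Suc D" and I: "initial_trace (comp_tree (Mk n 0 :: (nat,'ap) kripke)) \<tau>"
  shows "\<exists>\<rho>. initial_trace (comp_tree (Mk n 1 :: (nat,'ap) kripke)) \<rho> \<and> Zct n 1 0 D \<rho> \<tau>"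
proof -
  have tr: "is_trace (comp_tree (Mk n 0 :: (nat,'ap) kripke)) \<tau>" and hd: "hd \<tau> = [0]"
    using I by (simp_all add: initial_trace_def)
  obtain \<rho> i where R: "initial_trace (Mk n 0 :: (nat,'ap) kripke) \<rho>" "i < length \<rho>" "\<tau> = win \<rho> i"
    using ct_trace_char[OF tr] by blast
  have "take (Suc i) \<rho> = [0]" using hd R(3) hd_win[OF R(2)] by simp
  hence "length (take (Suc i) \<rho>) = 1" by simp
  hence i0: "i = 0" using R(2) by simp
  obtain a' e' where A: "a' < e'" "\<rho> = C n a' e'" "clip n a' = 0" using init_char[OF R(1)] by blast
  have tw: "\<tau> = W n a' a' e'" using R i0 A by (simp add: W_def)
  have a0: "a' \<le> 0" using clip0[OF A(3)] .
  have Ni: "int (3^Suc D) = int n" using n by simp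
  have "a' - cc n \<le> - int (3^Suc D)" "1 - cc n \<le> - int (3^Suc D)" using a0 Ni by (simp_all add: cc_def)
  hence "TDl (3^Suc D) [cc n, a', a'] [cc n, 1, 1]" unfolding TDl3_iff by (simp add: ts_lo)
  from pt[OF this, of e'] obtain y where T: "TDl (3^D) [cc n, a', a', e'] [cc n, 1, 1, y]" by auto
  have t1: "ts (3^D) (e' - a') = ts (3^D) (y - 1)" using TDl_nth[OF T, of 2 3] by simp
  have y: "1 < y" using A(1) tsp[OF t1] by simp
  have c1: "clip n 1 = 1" by (simp add: clip_def)
  have "is_trace (comp_tree (Mk n 1 :: (nat,'ap) kripke)) (W n 1 1 y)" using y c1 by (intro W_trace) auto
  moreover have "hd (W n 1 1 y) = [1]"
  proof -
    have "hd (W n 1 1 y) = take 1 (C n 1 y)" using y by (simp add: W_def hd_win)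
    also have "\<dots> = [clip n 1]" using y by (simp add: C_Cons)
    finally show ?thesis using c1 by simp
  qed
  ultimately have "initial_trace (comp_tree (Mk n 1 :: (nat,'ap) kripke)) (W n 1 1 y)"
    by (simp add: initial_trace_def)
  moreover have "3^D \<le> n + 1" using n by simp
  moreover have "(1::int) \<le> 1" "a' \<le> a'" by simp_all
  moreover have "Zct n 1 0 D (W n 1 1 y) \<tau>" unfolding Zct_def using TDl_sym[OF T] A(1,3) y c1 tw
      \<open>3^D \<le> n + 1\<close> \<open>(1::int) \<le> 1\<close> \<open>a' \<le> a'\<close>
    by (intro conjI exI[of _ 1] exI[of _ 1] exI[of _ y] exI[of _ a'] exI[of _ a'] exI[of _ e']) (assumption | rule refl)+
  ultimately show ?thesis by blast
qed

theorem proposition5p10: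
  fixes p :: "'ap::finite"
  shows "(\<not> (\<exists>\<psi> :: 'ap hs. \<forall>K :: (nat, 'ap) kripke.
              finite_kripke K \<longrightarrow> (models_st K \<psi> \<longleftrightarrow> models_F K p)))
       \<and> (\<not> (\<exists>\<psi> :: 'ap hs. \<forall>K :: (nat, 'ap) kripke.
              finite_kripke K \<longrightarrow> (models_ct K \<psi> \<longleftrightarrow> models_F K p)))"
proof (intro conjI notI)
  assume "\<exists>\<psi> :: 'ap hs. \<forall>K :: (nat, 'ap) kripke. finite_kripke K \<longrightarrow> (models_st K \<psi> \<longleftrightarrow> models_F K p)"
  then obtain \<psi> :: "'ap hs" where H: "\<forall>K :: (nat, 'ap) kripke. finite_kripke K \<longrightarrow> (models_st K \<psi> \<longleftrightarrow> models_F K p)"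
    by blast
  define D where "D = hdepth \<psi>"
  define n where "n = (3::nat)^Suc D"
  have f1: "finite_kripke (Mk n 1 :: (nat,'ap) kripke)" by (rule fin_Mk) simp
  have f0: "finite_kripke (Mk n 0 :: (nat,'ap) kripke)" by (rule fin_Mk) simp
  have m1: "models_st (Mk n 1 :: (nat,'ap) kripke) \<psi>" using H[rule_format, OF f1] F_good[of n p] by simp
  have "models_st (Mk n 0 :: (nat,'ap) kripke) \<psi>"
    unfolding models_st_def
  proof (intro allI impI)
    fix \<sigma> assume I: "initial_trace (Mk n 0 :: (nat,'ap) kripke) \<sigma>"
    obtain \<rho> where R: "initial_trace (Mk n 1 :: (nat,'ap) kripke) \<rho>" "Zst n D \<rho> \<sigma>"
      using st_partner[OF n_def I] by blast
    have "hs_sat (Mk n 1 :: (nat,'ap) kripke) \<rho> \<psi>" using m1 R(1) by (simp add: models_st_def)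
    thus "hs_sat (Mk n 0 :: (nat,'ap) kripke) \<sigma> \<psi>" using st_equiv[OF R(2), of \<psi>] D_def by simp
  qed
  hence "models_F (Mk n 0 :: (nat,'ap) kripke) p" using H[rule_format, OF f0] by simp
  thus False using F_bad[of n p] by simp
next
  assume "\<exists>\<psi> :: 'ap hs. \<forall>K :: (nat, 'ap) kripke. finite_kripke K \<longrightarrow> (models_ct K \<psi> \<longleftrightarrow> models_F K p)"
  then obtain \<psi> :: "'ap hs" where H: "\<forall>K :: (nat, 'ap) kripke. finite_kripke K \<longrightarrow> (models_ct K \<psi> \<longleftrightarrow> models_F K p)"
    by blast
  define D where "D = hdepth \<psi>"
  define n where "n = (3::nat)^Suc D"
  have f1: "finite_kripke (Mk n 1 :: (nat,'ap) kripke)" by (rule fin_Mk) simp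
  have f0: "finite_kripke (Mk n 0 :: (nat,'ap) kripke)" by (rule fin_Mk) simp
  have m1: "models_ct (Mk n 1 :: (nat,'ap) kripke) \<psi>" using H[rule_format, OF f1] F_good[of n p] by simp
  have "models_ct (Mk n 0 :: (nat,'ap) kripke) \<psi>"
    unfolding models_ct_def models_st_def
  proof (intro allI impI)
    fix \<sigma> assume I: "initial_trace (comp_tree (Mk n 0 :: (nat,'ap) kripke)) \<sigma>"
    obtain \<rho> where R: "initial_trace (comp_tree (Mk n 1 :: (nat,'ap) kripke)) \<rho>" "Zct n 1 0 D \<rho> \<sigma>"
      using ct_partner[OF n_def I] by blast
    have "hs_sat (comp_tree (Mk n 1 :: (nat,'ap) kripke)) \<rho> \<psi>" using m1 R(1) by (simp add: models_ct_def models_st_def)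
    thus "hs_sat (comp_tree (Mk n 0 :: (nat,'ap) kripke)) \<sigma> \<psi>" using ct_equiv[OF R(2), of \<psi>] D_def by simp
  qed
  hence "models_F (Mk n 0 :: (nat,'ap) kripke) p" using H[rule_format, OF f0] by simp
  thus False using F_bad[of n p] by simp
qed


end
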